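(* Let $n\ge1$, $U=\mathcal{U}(osp(1|2n))$ and $\Omega\subset U$ as defined below. For all $a,b$, $\sigma_{ab}\triangleright\Omega\subset\Omega$, so that under $\triangleright$ the space $\Omega$ is an $sp(2n)$-submodule of $U$. Moreover, $U$ (with the action $\triangleright$ of the $\sigma_{ab}$) and $\mathcal{U}(sp(2n))\otimes\Omega$ (with $sp(2n)$ acting by the adjoint action on $\mathcal{U}(sp(2n))$ and by $\triangleright$ on $\Omega$) are equivalent as $sp(2n)$-modules.
   Context: $\mathcal{U}(osp(1|2n))$ is the associative superalgebra over $\mathbb{C}$ generated by odd elements $\sigma_a$ and even elements $\sigma_{ab}=\sigma_{ba}$ ($1\le a,b\le 2n$) subject to $\{\sigma_a,\sigma_b\}=\sigma_{ab}$, $[\sigma_a,\sigma_{bc}]=-g_{ab}\sigma_c-g_{ac}\sigma_b$, $[\sigma_{ab},\sigma_{cd}]=-g_{ac}\sigma_{bd}-g_{ad}\sigma_{bc}-g_{bc}\sigma_{ad}-g_{bd}\sigma_{ac}$, where $(g_{ab})=\begin{pmatrix}0&-I_n\\ I_n&0\end{pmatrix}$. The $\sigma_{ab}$ span $sp(2n)$ and generate the subalgebra $\mathcal{U}(sp(2n))$. The action $\triangleright$ of generators on homogeneous $x\in U$ is: $\sigma_{ab}\triangleright x=[\sigma_{ab},x]$; $\sigma_a\triangleright x=\{\sigma_a,x\}=\sigma_ax+x\sigma_a$ if $x$ is even; $\sigma_a\triangleright x=[\sigma_a,x]=\sigma_ax-x\sigma_a$ if $x$ is odd (extended linearly). For indices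 $a_1,\dots,a_p\in\{1,\dots,2n\}$, $[a_1\dots a_p]=\sum_{s\in\mathfrak{S}_p}\varepsilon(s)\sigma_{a_{s(1)}}\cdots\sigma_{a_{s(p)}}$ ($[\,]=1$ for $p=0$), and $\Omega$ is the span of these elements for $0\le p\le 2n$. *)

theory Defs
  imports Complex_Main "HOL-Combinatorics.Permutations"
begin

text \<open>The indices 1..2n are modelled by the type 'n + 'n, where n = CARD('n):
  Inl i stands for the index i and Inr i for the index i+n.  Then
  g = [[0,-I],[I,0]] reads g(Inl i, Inr j) = -delta_ij, g(Inr i, Inl j) = delta_ij.\<close>

type_synonym 'n idx = "'n + 'n"

fun gform :: "'n idx \<Rightarrow> 'n idx \<Rightarrow> complex" where
  "gform (Inl i) (Inr j) = (if i = j then -1 else 0)"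
| "gform (Inr i) (Inl j) = (if i = j then 1 else 0)"
| "gform _ _ = 0"

datatype 'n gen = OddG "'n idx" | EvenG "'n idx" "'n idx"

datatype 'n fexpr =
    G "'n gen"
  | Zero_e
  | Onee
  | Ad "'n fexpr" "'n fexpr"
  | Mu "'n fexpr" "'n fexpr"
  | Sc complex "'n fexpr"

definition Sb :: "'n fexpr \<Rightarrow> 'n fexpr \<Rightarrow> 'n fexpr" where
  "Sb x y = Ad x (Sc (-1) y)"

text \<open>The congruence generated by the axioms of unital associative C-algebras
  together with the defining relations of U(osp(1|2n)).  The quotient of the term
  algebra by it is exactly U(osp(1|2n)).\<close>

inductive ocong :: "'n fexpr \<Rightarrow> 'n fexpr \<Rightarrow> bool" where
  refl: "ocong x x"
| sym: "ocong x y \<Longrightarrow> ocong y x"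
| trans: "ocong x y \<Longrightarrow> ocong y z \<Longrightarrow> ocong x z"
| cAd: "ocong x y \<Longrightarrow> ocong x' y' \<Longrightarrow> ocong (Ad x x') (Ad y y')"
| cMu: "ocong x y \<Longrightarrow> ocong x' y' \<Longrightarrow> ocong (Mu x x') (Mu y y')"
| cSc: "ocong x y \<Longrightarrow> ocong (Sc c x) (Sc c y)"
| add_assoc: "ocong (Ad (Ad x y) z) (Ad x (Ad y z))"
| add_comm: "ocong (Ad x y) (Ad y x)"
| add_zero: "ocong (Ad Zero_e x) x"
| add_inv: "ocong (Ad x (Sc (-1) x)) Zero_e"
| sc_add: "ocong (Sc c (Ad x y)) (Ad (Sc c x) (Sc c y))"
| sc_plus: "ocong (Sc (c + d) x) (Ad (Sc c x) (Sc d x))"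
| sc_sc: "ocong (Sc c (Sc d x)) (Sc (c * d) x)"
| sc_one: "ocong (Sc 1 x) x"
| mul_assoc: "ocong (Mu (Mu x y) z) (Mu x (Mu y z))"
| one_l: "ocong (Mu Onee x) x"
| one_r: "ocong (Mu x Onee) x"
| distr_l: "ocong (Mu x (Ad y z)) (Ad (Mu x y) (Mu x z))"
| distr_r: "ocong (Mu (Ad x y) z) (Ad (Mu x z) (Mu y z))"
| sc_mul_l: "ocong (Sc c (Mu x y)) (Mu (Sc c x) y)"
| sc_mul_r: "ocong (Sc c (Mu x y)) (Mu x (Sc c y))"
| rel_sym: "ocong (G (EvenG a b)) (G (EvenG b a))"
| rel_odd_odd: "ocong (Ad (Mu (G (OddG a)) (G (OddG b))) (Mu (G (OddG b)) (G (OddG a))))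
                      (G (EvenG a b))"
| rel_odd_even: "ocong (Sb (Mu (G (OddG a)) (G (EvenG b c))) (Mu (G (EvenG b c)) (G (OddG a))))
                       (Ad (Sc (- gform a b) (G (OddG c))) (Sc (- gform a c) (G (OddG b))))"
| rel_even_even: "ocong (Sb (Mu (G (EvenG a b)) (G (EvenG c d))) (Mu (G (EvenG c d)) (G (EvenG a b))))
                  (Ad (Ad (Sc (- gform a c) (G (EvenG b d))) (Sc (- gform a d) (G (EvenG b c))))
                      (Ad (Sc (- gform b c) (G (EvenG a d))) (Sc (- gform b d) (G (EvenG a c)))))"

lemma equivp_ocong: "equivp ocong"
  by (rule equivpI) (auto simp: reflp_def symp_def transp_def intro: ocong.intros)

quotient_type 'n U = "'n fexpr" / ocong
  by (rule equivp_ocong)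

instantiation U :: (type) ring
begin
lift_definition zero_U :: "'a U" is Zero_e .
lift_definition plus_U :: "'a U \<Rightarrow> 'a U \<Rightarrow> 'a U" is Ad by (rule ocong.cAd)
lift_definition times_U :: "'a U \<Rightarrow> 'a U \<Rightarrow> 'a U" is Mu by (rule ocong.cMu)
lift_definition uminus_U :: "'a U \<Rightarrow> 'a U" is "Sc (-1)" by (rule ocong.cSc)
lift_definition minus_U :: "'a U \<Rightarrow> 'a U \<Rightarrow> 'a U" is Sb
  unfolding Sb_def by (intro ocong.cAd ocong.cSc)
instance
proof
  fix a b c :: "'a U"
  show "a + b + c = a + (b + c)" by transfer (rule ocong.add_assoc)
  show "a + b = b + a" by transfer (rule ocong.add_comm)
  show "0 + a = a" by transfer (rule ocong.add_zero)
  show "- a + a = 0" by transfer (meson ocong.add_comm ocong.add_inv ocong.trans)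
  show "a - b = a + - b" by transfer (simp add: Sb_def ocong.refl)
  show "a * b * c = a * (b * c)" by transfer (rule ocong.mul_assoc)
  show "(a + b) * c = a * c + b * c" by transfer (rule ocong.distr_r)
  show "a * (b + c) = a * b + a * c" by transfer (rule ocong.distr_l)
qed
end

instantiation U :: (type) monoid_mult
begin
lift_definition one_U :: "'a U" is Onee .
instance
proof
  fix a :: "'a U"
  show "1 * a = a" by transfer (rule ocong.one_l)
  show "a * 1 = a" by transfer (rule ocong.one_r)
qed
end

lift_definition scaleU :: "complex \<Rightarrow> 'n U \<Rightarrow> 'n U" is Sc by (rule ocong.cSc)

lift_definition sig :: "'n idx \<Rightarrow> 'n U" is "\<lambda>a. G (OddG a)" .
lift_definition sig2 :: "'n idx \<Rightarrow> 'n idx \<Rightarrow> 'n U" is "\<lambda>a b. G (EvenG a b)" .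

definition uspan :: "'n U set \<Rightarrow> 'n U set" where
  "uspan S = {x. \<exists>F c. finite F \<and> F \<subseteq> S \<and> x = (\<Sum>v\<in>F. scaleU (c v) v)}"

definition act2 :: "'n idx \<Rightarrow> 'n idx \<Rightarrow> 'n U \<Rightarrow> 'n U" where
  "act2 a b x = sig2 a b * x - x * sig2 a b"

definition wedge :: "'n idx list \<Rightarrow> 'n U" where
  "wedge xs = (\<Sum>s\<in>{s. s permutes {..<length xs}}.
      scaleU (of_int (sign s)) (prod_list (map (\<lambda>i. sig (xs ! s i)) [0..<length xs])))"

definition Omega :: "'n U set" where
  "Omega = uspan {wedge xs | xs. length xs \<le> 2 * card (UNIV :: 'n set)}"

inductive_set Usp :: "'n U set" where
  one: "1 \<in> Usp"
| gen: "sig2 a b \<in> Usp"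
| add: "x \<in> Usp \<Longrightarrow> y \<in> Usp \<Longrightarrow> x + y \<in> Usp"
| mul: "x \<in> Usp \<Longrightarrow> y \<in> Usp \<Longrightarrow> x * y \<in> Usp"
| scl: "x \<in> Usp \<Longrightarrow> scaleU c x \<in> Usp"

section \<open>Tensor product A (x) B of two subspaces of U, as free vector space modulo bilinearity\<close>

definition FSp :: "'n U set \<Rightarrow> 'n U set \<Rightarrow> ('n U \<times> 'n U \<Rightarrow> complex) set" where
  "FSp A B = {f. finite {p. f p \<noteq> 0} \<and> {p. f p \<noteq> 0} \<subseteq> A \<times> B}"

definition delta :: "'n U \<Rightarrow> 'n U \<Rightarrow> ('n U \<times> 'n U \<Rightarrow> complex)" where
  "delta x y = (\<lambda>p. if p = (x, y) then 1 else 0)"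

definition bilin_rels :: "'n U set \<Rightarrow> 'n U set \<Rightarrow> ('n U \<times> 'n U \<Rightarrow> complex) set" where
  "bilin_rels A B =
     {(\<lambda>p. delta (x + x') y p - delta x y p - delta x' y p) | x x' y. x \<in> A \<and> x' \<in> A \<and> y \<in> B}
   \<union> {(\<lambda>p. delta x (y + y') p - delta x y p - delta x y' p) | x y y'. x \<in> A \<and> y \<in> B \<and> y' \<in> B}
   \<union> {(\<lambda>p. delta (scaleU c x) y p - c * delta x y p) | c x y. x \<in> A \<and> y \<in> B}
   \<union> {(\<lambda>p. delta x (scaleU c y) p - c * delta x y p) | c x y. x \<in> A \<and> y \<in> B}"

text \<open>The subspace they span (the kernel of FSp A B -> A (x) B).\<close>
definition RelSp :: "'n U set \<Rightarrow> 'n U set \<Rightarrow> ('n U \<times> 'n U \<Rightarrow> complex) set" where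
  "RelSp A B = {f. \<exists>F c. finite F \<and> F \<subseteq> bilin_rels A B \<and> f = (\<lambda>p. \<Sum>r\<in>F. c r * r p)}"

text \<open>U(sp(2n)) (x) Omega, with sp(2n) acting by ad on the first factor and by |> on the
  second, is equivalent to U (with |>) iff there is a linear map Phi from the free space
  FSp onto U whose kernel is exactly RelSp (i.e. a linear isomorphism
  FSp/RelSp = U(sp) (x) Omega -> U) intertwining the actions of all sigma_ab.\<close>
definition sp_equiv_tensor :: "'n U set \<Rightarrow> 'n U set \<Rightarrow> bool" where
  "sp_equiv_tensor A B \<longleftrightarrow>
    (\<exists>Phi :: ('n U \<times> 'n U \<Rightarrow> complex) \<Rightarrow> 'n U.
       (\<forall>f\<in>FSp A B. \<forall>g\<in>FSp A B. Phi (\<lambda>p. f p + g p) = Phi f + Phi g) \<and>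
       (\<forall>f\<in>FSp A B. \<forall>c. Phi (\<lambda>p. c * f p) = scaleU c (Phi f)) \<and>
       Phi ` FSp A B = UNIV \<and>
       (\<forall>f\<in>FSp A B. Phi f = 0 \<longleftrightarrow> f \<in> RelSp A B) \<and>
       (\<forall>a b. \<forall>x\<in>A. \<forall>y\<in>B.
          act2 a b (Phi (delta x y)) = Phi (delta (act2 a b x) y) + Phi (delta x (act2 a b y))))"

end

theory Submission
  imports Defs "HOL-Library.Countable" "HOL-Library.Function_Algebras"
begin

lemma scaleU_add_right: "scaleU c (x + y) = scaleU c x + scaleU c y"
  by transfer (rule ocong.sc_add)
lemma scaleU_add_left: "scaleU (c + d) x = scaleU c x + scaleU d x"
  by transfer (rule ocong.sc_plus)
lemma scaleU_scaleU: "scaleU c (scaleU d x) = scaleU (c * d) x"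
  by transfer (rule ocong.sc_sc)
lemma scaleU_one: "scaleU 1 x = x"
  by transfer (rule ocong.sc_one)
lemma scaleU_mult_left: "scaleU c x * y = scaleU c (x * y)"
  by transfer (rule ocong.sym, rule ocong.sc_mul_l)
lemma scaleU_mult_right: "x * scaleU c y = scaleU c (x * y)"
  by transfer (rule ocong.sym, rule ocong.sc_mul_r)
lemma scaleU_minus1: "scaleU (-1) x = - x"
  by transfer (rule ocong.refl)

lemma scaleU_zero_left: "scaleU 0 x = 0"
proof -
  have "scaleU 0 x = scaleU 0 x + scaleU 0 x" using scaleU_add_left[of 0 0 x] by simp
  then show ?thesis by simp
qed
lemma scaleU_zero_right: "scaleU c 0 = 0"
proof -
  have "scaleU c 0 = scaleU c 0 + scaleU c 0" using scaleU_add_right[of c 0 0] by simp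
  then show ?thesis by simp
qed
lemma scaleU_minus_right: "scaleU c (- x) = - scaleU c x"
  by (metis add_eq_0_iff scaleU_add_right scaleU_zero_right)
lemma scaleU_minus_left: "scaleU (- c) x = - scaleU c x"
  by (metis add_eq_0_iff scaleU_add_left scaleU_zero_left add.right_inverse)
lemma scaleU_diff_right: "scaleU c (x - y) = scaleU c x - scaleU c y"
  by (simp only: diff_conv_add_uminus scaleU_add_right scaleU_minus_right)
lemma scaleU_diff_left: "scaleU (c - d) x = scaleU c x - scaleU d x"
  by (simp only: diff_conv_add_uminus scaleU_add_left scaleU_minus_left)
lemma scaleU_sum_right: "scaleU c (sum f A) = (\<Sum>a\<in>A. scaleU c (f a))"
  by (induction A rule: infinite_finite_induct) (auto simp: scaleU_zero_right scaleU_add_right)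
lemma scaleU_sum_left: "scaleU (sum f A) x = (\<Sum>a\<in>A. scaleU (f a) x)"
  by (induction A rule: infinite_finite_induct) (auto simp: scaleU_zero_left scaleU_add_left)
lemma scaleU_central: "scaleU c 1 * x = x * scaleU c 1"
  by (simp add: scaleU_mult_left scaleU_mult_right)

lemma scaleU_inj: "c \<noteq> 0 \<Longrightarrow> scaleU c x = 0 \<Longrightarrow> x = 0"
  by (metis scaleU_scaleU scaleU_zero_right scaleU_one field_class.field_inverse mult.commute)

lemma U_two_zero: "(x::'n U) + x = 0 \<Longrightarrow> x = 0"
proof -
  assume "x + x = 0"
  then have "scaleU 2 x = 0" using scaleU_add_left[of 1 1 x] by (simp add: scaleU_one)
  then show "x = 0" by (rule scaleU_inj[rotated]) simp
qed


instantiation U :: (type) real_vector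
begin
definition scaleR_U :: "real \<Rightarrow> 'a U \<Rightarrow> 'a U" where
  "scaleR_U r x = scaleU (of_real r) x"
instance
  by standard (simp_all add: scaleR_U_def scaleU_add_right scaleU_add_left scaleU_scaleU scaleU_one)
end

lemma scaleR_U_mult_left [simp]: "scaleR r (x::'n U) * y = scaleR r (x * y)"
  by (simp add: scaleR_U_def scaleU_mult_left)
lemma scaleR_U_mult_right [simp]: "(x::'n U) * scaleR r y = scaleR r (x * y)"
  by (simp add: scaleR_U_def scaleU_mult_right)

fun gr :: "'n idx \<Rightarrow> 'n idx \<Rightarrow> real" where
  "gr (Inl i) (Inr j) = (if i = j then -1 else 0)"
| "gr (Inr i) (Inl j) = (if i = j then 1 else 0)"
| "gr _ _ = 0"

lemma gform_gr: "gform a b = complex_of_real (gr a b)"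
  by (cases a; cases b) auto
lemma gr_antisym: "gr b a = - gr a b"
  by (cases a; cases b) auto
lemma gr_refl [simp]: "gr a a = 0"
  by (cases a) auto

definition lt :: "'n::finite idx \<Rightarrow> 'n idx \<Rightarrow> bool" where
  "lt a b \<longleftrightarrow> to_nat a < to_nat b"
definition below :: "'n::finite idx \<Rightarrow> 'n idx set \<Rightarrow> bool" where
  "below a J \<longleftrightarrow> (\<forall>j\<in>J. lt a j)"
definition mn :: "'n::finite idx set \<Rightarrow> 'n idx" where
  "mn J = (THE i. i \<in> J \<and> (\<forall>j\<in>J. to_nat i \<le> to_nat j))"

lemma mn_prop: assumes "J \<noteq> {}" shows "mn J \<in> J \<and> (\<forall>j\<in>J. to_nat (mn J) \<le> to_nat j)"
proof -
  have fin: "finite (to_nat ` J)" by simp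
  have "Min (to_nat ` J) \<in> to_nat ` J" using Min_in[OF fin] assms by auto
  then obtain i where i: "i \<in> J" "to_nat i = Min (to_nat ` J)" by auto
  have P: "i \<in> J \<and> (\<forall>j\<in>J. to_nat i \<le> to_nat j)" using i fin by auto
  have "\<And>i'. i' \<in> J \<and> (\<forall>j\<in>J. to_nat i' \<le> to_nat j) \<Longrightarrow> i' = i"
    using P by (meson antisym inj_eq inj_to_nat)
  then have "mn J = i" unfolding mn_def using P by (rule the_equality[rotated]) blast
  then show ?thesis using P by simp
qed

lemma mn_in: "J \<noteq> {} \<Longrightarrow> mn J \<in> J" using mn_prop by blast
lemma mn_le: "J \<noteq> {} \<Longrightarrow> j \<in> J \<Longrightarrow> to_nat (mn J) \<le> to_nat j" using mn_prop by blast

lemma below_mn: "J \<noteq> {} \<Longrightarrow> below (mn J) (J - {mn J})"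
  unfolding below_def lt_def using mn_le by (metis DiffE inj_eq inj_to_nat le_neq_implies_less singletonI)
lemma below_notin: "below a J \<Longrightarrow> a \<notin> J"
  unfolding below_def lt_def by auto
lemma insert_mn: "J \<noteq> {} \<Longrightarrow> insert (mn J) (J - {mn J}) = J"
  using mn_in by auto
lemma card_mn: "J \<noteq> {} \<Longrightarrow> card J = Suc (card (J - {mn J}))"
  using mn_in by (metis card_Suc_Diff1 finite)
lemma notbelow_gt: "J \<noteq> {} \<Longrightarrow> \<not> below a J \<Longrightarrow> a \<noteq> mn J \<Longrightarrow> lt (mn J) a"
  unfolding below_def lt_def
  by (metis inj_eq inj_to_nat le_neq_implies_less mn_le not_le order_trans)
lemma mn_insert_below: "below a J \<Longrightarrow> mn (insert a J) = a"
proof -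
  assume b: "below a J"
  have ne: "insert a J \<noteq> {}" by simp
  have "mn (insert a J) \<in> insert a J" using mn_in[OF ne] .
  moreover have "to_nat (mn (insert a J)) \<le> to_nat a" using mn_le[OF ne] by simp
  ultimately show ?thesis using b unfolding below_def lt_def by auto
qed
lemma below_insert: "below a J \<Longrightarrow> lt a b \<Longrightarrow> below a (insert b J)"
  unfolding below_def by auto
lemma lt_irrefl: "\<not> lt a a" unfolding lt_def by simp
lemma lt_asym: "lt a b \<Longrightarrow> \<not> lt b a" unfolding lt_def by simp

section \<open>The module M\<close>

type_synonym 'n M = "'n idx set \<Rightarrow> 'n U"

definition eU :: "'n idx set \<Rightarrow> 'n U \<Rightarrow> 'n M" where
  "eU J u = (\<lambda>K. if K = J then u else 0)"
definition e :: "'n idx set \<Rightarrow> 'n M" where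
  "e J = eU J 1"
definition app :: "('n::finite idx set \<Rightarrow> 'n M) \<Rightarrow> 'n M \<Rightarrow> 'n M" where
  "app r m = (\<lambda>K. \<Sum>L\<in>UNIV. r L K * m L)"
definition smul :: "real \<Rightarrow> 'n M \<Rightarrow> 'n M" where
  "smul c m = (\<lambda>K. scaleR c (m K))"
definition rmul :: "'n M \<Rightarrow> 'n U \<Rightarrow> 'n M" where
  "rmul m u = (\<lambda>K. m K * u)"

fun tab :: "nat \<Rightarrow> ('n::finite idx \<Rightarrow> 'n idx set \<Rightarrow> 'n M) \<times> ('n idx \<Rightarrow> 'n idx \<Rightarrow> 'n idx set \<Rightarrow> 'n M)" where
  "tab 0 = ((\<lambda>a J. e (insert a J)), (\<lambda>b c J. eU {} (sig2 b c)))"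
| "tab (Suc k) = (let R = fst (tab k); Q = snd (tab k) in
    ((\<lambda>a J. if card J \<le> k then R a J else
        (let i = mn J; J' = J - {i} in
          if below a J then e (insert a J)
          else if a = i then smul (1/2) (Q a a J')
          else - app (\<lambda>L. if card L \<le> k then R i L else e (insert i L)) (R a J') + Q a i J')),
     (\<lambda>b c J. if card J \<le> k then Q b c J else
        (let i = mn J; J' = J - {i} in
          app (\<lambda>L. if card L \<le> k then R i L else 0) (Q b c J')
            + smul (gr i b) (R c J') + smul (gr i c) (R b J')))))"

definition rho :: "'n::finite idx \<Rightarrow> 'n idx set \<Rightarrow> 'n M" where
  "rho a J = fst (tab (card J)) a J"
definition Qm :: "'n::finite idx \<Rightarrow> 'n idx \<Rightarrow> 'n idx set \<Rightarrow> 'n M" where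
  "Qm b c J = snd (tab (card J)) b c J"

lemma tab_stable: "card J \<le> k \<Longrightarrow> fst (tab k) a J = rho a J \<and> snd (tab k) b c J = Qm b c J"
proof (induction k arbitrary: a b c J)
  case 0
  then show ?case by (simp add: rho_def Qm_def)
next
  case (Suc k)
  show ?case
  proof (cases "card J \<le> k")
    case True
    then show ?thesis using Suc.IH by (simp add: Let_def)
  next
    case False
    then have "card J = Suc k" using Suc.prems by simp
    then show ?thesis by (simp add: rho_def Qm_def)
  qed
qed

lemma rho_empty: "rho a {} = e {a}"
  by (simp add: rho_def)
lemma Qm_empty: "Qm b c {} = eU {} (sig2 b c)"
  by (simp add: Qm_def)

lemma tab_stable1: "card J \<le> k \<Longrightarrow> fst (tab k) a J = rho a J"
  using tab_stable by blast
lemma tab_stable2: "card J \<le> k \<Longrightarrow> snd (tab k) b c J = Qm b c J"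
  using tab_stable by blast

lemma rho_unfold:
  assumes "J \<noteq> {}"
  shows "rho a J = (if below a J then e (insert a J)
          else if a = mn J then smul (1/2) (Qm a a (J - {mn J}))
          else - app (\<lambda>L. if card L \<le> card (J - {mn J}) then rho (mn J) L else e (insert (mn J) L))
                    (rho a (J - {mn J})) + Qm a (mn J) (J - {mn J}))"
proof -
  define k where "k = card (J - {mn J})"
  have c: "card J = Suc k" using card_mn[OF assms(1)] by (simp add: k_def)
  have "rho a J = fst (tab (Suc k)) a J" by (simp add: rho_def c)
  then show ?thesis
    by (simp add: Let_def c k_def[symmetric] tab_stable1 tab_stable2 cong: if_cong)
qed

lemma Qm_unfold:
  assumes "J \<noteq> {}"
  shows "Qm b c J = app (\<lambda>L. if card L \<le> card (J - {mn J}) then rho (mn J) L else 0) (Qm b c (J - {mn J}))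
            + smul (gr (mn J) b) (rho c (J - {mn J})) + smul (gr (mn J) c) (rho b (J - {mn J}))"
proof -
  define k where "k = card (J - {mn J})"
  have c: "card J = Suc k" using card_mn[OF assms(1)] by (simp add: k_def)
  have "Qm b c J = snd (tab (Suc k)) b c J" by (simp add: Qm_def c)
  then show ?thesis
    by (simp add: Let_def c k_def[symmetric] tab_stable1 tab_stable2 cong: if_cong)
qed


lemma app_e [simp]: "app r (e L) = r L"
  unfolding app_def e_def eU_def by (rule ext) (simp add: if_distrib cong: if_cong)
lemma app_eU: "app r (eU L u) = rmul (r L) u"
  unfolding app_def rmul_def eU_def by (rule ext) (simp add: if_distrib cong: if_cong)
lemma app_add [simp]: "app r (m1 + m2) = app r m1 + app r m2"
  unfolding app_def by (rule ext) (simp add: distrib_left sum.distrib)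
lemma app_zero [simp]: "app r 0 = 0"
  unfolding app_def by (rule ext) simp
lemma app_minus [simp]: "app r (- m) = - app r m"
  unfolding app_def by (rule ext) (simp add: sum_negf)
lemma app_diff [simp]: "app r (m1 - m2) = app r m1 - app r m2"
  unfolding app_def by (rule ext) (simp add: right_diff_distrib sum_subtractf)
lemma app_smul [simp]: "app r (smul c m) = smul c (app r m)"
  unfolding app_def smul_def by (rule ext) (simp add: scaleR_sum_right)
lemma app_rmul: "app r (rmul m u) = rmul (app r m) u"
  unfolding app_def rmul_def by (rule ext) (simp add: sum_distrib_right mult.assoc)
lemma app_app: "app r (app s m) = app (\<lambda>L. app r (s L)) m"
proof (rule ext)
  fix K
  have "app r (app s m) K = (\<Sum>L\<in>UNIV. \<Sum>L'\<in>UNIV. r L K * (s L' L * m L'))"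
    unfolding app_def by (simp add: sum_distrib_left)
  also have "\<dots> = (\<Sum>L'\<in>UNIV. \<Sum>L\<in>UNIV. r L K * (s L' L * m L'))"
    by (rule sum.swap)
  also have "\<dots> = app (\<lambda>L. app r (s L)) m K"
    unfolding app_def by (simp add: sum_distrib_right mult.assoc)
  finally show "app r (app s m) K = app (\<lambda>L. app r (s L)) m K" .
qed
lemma app_cong: "(\<And>L. m L \<noteq> 0 \<Longrightarrow> r L = s L) \<Longrightarrow> app r m = app s m"
  unfolding app_def by (rule ext, rule sum.cong) (simp, metis mult_zero_right)
lemma app_supp: "app r m K \<noteq> 0 \<Longrightarrow> \<exists>L. m L \<noteq> 0 \<and> r L K \<noteq> 0"
  unfolding app_def by (metis (mono_tags, lifting) mult_zero_left mult_zero_right sum.neutral)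

lemma smul_add [simp]: "smul c (m1 + m2) = smul c m1 + smul c m2"
  unfolding smul_def by (rule ext) (simp add: scaleR_add_right)
lemma smul_smul [simp]: "smul c (smul d m) = smul (c * d) m"
  unfolding smul_def by (rule ext) simp
lemma smul_zero [simp]: "smul c 0 = 0" "smul 0 m = 0"
  unfolding smul_def by (rule ext, simp)+
lemma smul_one [simp]: "smul 1 m = m"
  unfolding smul_def by (rule ext) simp
lemma smul_minus [simp]: "smul c (- m) = - smul c m"
  unfolding smul_def by (rule ext) simp
lemma smul_diff [simp]: "smul c (m1 - m2) = smul c m1 - smul c m2"
  unfolding smul_def by (rule ext) (simp add: scaleR_diff_right)
lemma smul_add_left: "smul (c + d) m = smul c m + smul d m"
  unfolding smul_def by (rule ext) (simp add: scaleR_add_left)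
lemma smul_uminus_left: "smul (- c) m = - smul c m"
  unfolding smul_def by (rule ext) simp
lemma smul_apply: "smul c m K = scaleR c (m K)"
  unfolding smul_def by simp

lemma e_apply: "e J K = (if K = J then 1 else 0)"
  unfolding e_def eU_def by simp

lemma rho_Qm_supp:
  fixes J :: "'n::finite idx set"
  shows "(\<forall>a K. rho a J K \<noteq> 0 \<longrightarrow> card K \<le> card J \<or> K = insert a J) \<and>
   (\<forall>b c K. Qm b c J K \<noteq> 0 \<longrightarrow> card K \<le> card J)"
proof (induction "card J" arbitrary: J rule: less_induct)
  case less
  show ?case
  proof (cases "J = {}")
    case True
    then show ?thesis by (auto simp: rho_empty Qm_empty e_apply eU_def)
  next
    case ne: False
    define i where "i = mn J"
    define J' where "J' = J - {i}"
    have cJ: "card J = Suc (card J')" using card_mn[OF ne] by (simp add: J'_def i_def)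
    have iJ: "insert i J' = J" using insert_mn[OF ne] by (simp add: J'_def i_def)
    have IH: "(\<forall>a K. rho a L K \<noteq> 0 \<longrightarrow> card K \<le> card L \<or> K = insert a L) \<and>
       (\<forall>b c K. Qm b c L K \<noteq> 0 \<longrightarrow> card K \<le> card L)" if "card L < card J" for L :: "'n idx set"
      using less that by blast
    have IHJ': "(\<forall>a K. rho a J' K \<noteq> 0 \<longrightarrow> card K \<le> card J' \<or> K = insert a J') \<and>
       (\<forall>b c K. Qm b c J' K \<noteq> 0 \<longrightarrow> card K \<le> card J')" using IH cJ by simp
    have cardins: "card (insert x L) \<le> Suc (card L)" for x and L :: "'n idx set"
      by (simp add: card_insert_le_m1)
    have rs: "card K \<le> card J \<or> K = insert a J" if "rho a J K \<noteq> 0" for a K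
    proof -
      consider (b) "below a J" | (m) "\<not> below a J" "a = i" | (o) "\<not> below a J" "a \<noteq> i" by blast
      then show ?thesis
      proof cases
        case b then show ?thesis using that rho_unfold[OF ne, of a, folded i_def, folded J'_def] by (simp add: e_apply split: if_splits)
      next
        case m
        then have "Qm a a J' K \<noteq> 0" using that rho_unfold[OF ne, of a, folded i_def, folded J'_def]
          by (simp add: smul_apply)
        then have "card K \<le> card J'" using IHJ' by blast
        then show ?thesis using cJ by simp
      next
        case o
        then have "app (\<lambda>L. if card L \<le> card J' then rho i L else e (insert i L)) (rho a J') K \<noteq> 0
                   \<or> Qm a i J' K \<noteq> 0" using that rho_unfold[OF ne, of a, folded i_def, folded J'_def]
          by auto
        then show ?thesis
        proof
          assume "app (\<lambda>L. if card L \<le> card J' then rho i L else e (insert i L)) (rho a J') K \<noteq> 0"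
          then obtain L where L: "rho a J' L \<noteq> 0"
            "(if card L \<le> card J' then rho i L else e (insert i L)) K \<noteq> 0"
            using app_supp by blast
          show ?thesis
          proof (cases "card L \<le> card J'")
            case True
            then have "rho i L K \<noteq> 0" using L by simp
            then have "card K \<le> card L \<or> K = insert i L" using IH[of L] True cJ by auto
            then show ?thesis using True cJ cardins[of i L] by auto
          next
            case False
            then have "L = insert a J'" using L IHJ' by auto
            moreover have "K = insert i L" using L False by (simp add: e_apply split: if_splits)
            ultimately show ?thesis using iJ by auto
          qed
        next
          assume "Qm a i J' K \<noteq> 0"
          then have "card K \<le> card J'" using IHJ' by blast
          then show ?thesis using cJ by simp
        qed
      qed
    qed
    have qs: "card K \<le> card J" if "Qm b c J K \<noteq> 0" for b c K
    proof -
      have "app (\<lambda>L. if card L \<le> card J' then rho i L else 0) (Qm b c J') K \<noteq> 0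
            \<or> rho c J' K \<noteq> 0 \<or> rho b J' K \<noteq> 0"
        using that Qm_unfold[OF ne, of b c, folded i_def, folded J'_def] by (auto simp: smul_apply)
      then show ?thesis
      proof (elim disjE)
        assume "app (\<lambda>L. if card L \<le> card J' then rho i L else 0) (Qm b c J') K \<noteq> 0"
        then obtain L where L: "Qm b c J' L \<noteq> 0"
            "(if card L \<le> card J' then rho i L else 0) K \<noteq> 0"
            using app_supp by blast
        then have cl: "card L \<le> card J'" by (simp split: if_splits)
        then have "rho i L K \<noteq> 0" using L by simp
        then have "card K \<le> card L \<or> K = insert i L" using IH[of L] cl cJ by auto
        then show ?thesis using cl cJ cardins[of i L] by auto
      next
        assume "rho c J' K \<noteq> 0"
        then have "card K \<le> card J' \<or> K = insert c J'" using IHJ' by blast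
        then show ?thesis using cJ cardins[of c J'] by (metis le_SucI order_trans)
      next
        assume "rho b J' K \<noteq> 0"
        then have "card K \<le> card J' \<or> K = insert b J'" using IHJ' by blast
        then show ?thesis using cJ cardins[of b J'] by (metis le_SucI order_trans)
      qed
    qed
    show ?thesis using rs qs by blast
  qed
qed

lemma rho_supp: "rho a J K \<noteq> 0 \<Longrightarrow> card K \<le> card J \<or> K = insert a J"
  using rho_Qm_supp by blast
lemma Qm_supp: "Qm b c J K \<noteq> 0 \<Longrightarrow> card K \<le> card J"
  using rho_Qm_supp by blast


lemma sig2_sym: "sig2 a b = sig2 b a"
  by transfer (rule ocong.rel_sym)
lemma sig_anticomm: "sig a * sig b + sig b * sig a = sig2 a b"
  by transfer (rule ocong.rel_odd_odd)
lemma sig_sig2_comm_c: "sig a * sig2 b c - sig2 b c * sig a = scaleU (- gform a b) (sig c) + scaleU (- gform a c) (sig b)"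
  by transfer (rule ocong.rel_odd_even)
lemma sig2_sig2_comm_c: "sig2 a b * sig2 c d - sig2 c d * sig2 a b =
   (scaleU (- gform a c) (sig2 b d) + scaleU (- gform a d) (sig2 b c)) +
   (scaleU (- gform b c) (sig2 a d) + scaleU (- gform b d) (sig2 a c))"
  by transfer (rule ocong.rel_even_even)

lemma scaleU_of_real: "scaleU (complex_of_real r) x = scaleR r x"
  by (simp add: scaleR_U_def)
lemma scaleU_neg_gform: "scaleU (- gform a b) x = scaleR (- gr a b) x"
  by (simp add: gform_gr scaleU_of_real[symmetric])

lemma sig_sig2_comm: "sig a * sig2 b c - sig2 b c * sig a = scaleR (- gr a b) (sig c) + scaleR (- gr a c) (sig b)"
  using sig_sig2_comm_c by (simp add: scaleU_neg_gform)
lemma sig2_sig2_comm: "sig2 a b * sig2 c d - sig2 c d * sig2 a b =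
   scaleR (- gr a c) (sig2 b d) + scaleR (- gr a d) (sig2 b c) +
   scaleR (- gr b c) (sig2 a d) + scaleR (- gr b d) (sig2 a c)"
  using sig2_sig2_comm_c by (simp add: scaleU_neg_gform algebra_simps)

instantiation "fun" :: (type, real_vector) real_vector
begin
definition scaleR_fun :: "real \<Rightarrow> ('a \<Rightarrow> 'b) \<Rightarrow> 'a \<Rightarrow> 'b" where
  "scaleR_fun r f = (\<lambda>x. scaleR r (f x))"
instance
  by standard (auto simp: scaleR_fun_def fun_eq_iff scaleR_add_right scaleR_add_left)
end

lemma smul_scaleR: "smul c m = scaleR c m"
  by (simp add: smul_def scaleR_fun_def)

definition rh :: "'n::finite idx \<Rightarrow> 'n M \<Rightarrow> 'n M" where
  "rh a m = app (rho a) m"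
definition Qo :: "'n::finite idx \<Rightarrow> 'n idx \<Rightarrow> 'n M \<Rightarrow> 'n M" where
  "Qo b c m = app (Qm b c) m"

lemma rh_e [simp]: "rh a (e J) = rho a J" by (simp add: rh_def)
lemma Qo_e [simp]: "Qo b c (e J) = Qm b c J" by (simp add: Qo_def)

lemma rh_add [simp]: "rh a (x + y) = rh a x + rh a y" by (simp add: rh_def)
lemma rh_diff [simp]: "rh a (x - y) = rh a x - rh a y" by (simp add: rh_def)
lemma rh_minus [simp]: "rh a (- x) = - rh a x" by (simp add: rh_def)
lemma rh_zero [simp]: "rh a 0 = 0" by (simp add: rh_def)
lemma rh_scaleR [simp]: "rh a (scaleR c x) = scaleR c (rh a x)" by (simp add: rh_def smul_scaleR[symmetric])
lemma Qo_add [simp]: "Qo b c (x + y) = Qo b c x + Qo b c y" by (simp add: Qo_def)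
lemma Qo_diff [simp]: "Qo b c (x - y) = Qo b c x - Qo b c y" by (simp add: Qo_def)
lemma Qo_minus [simp]: "Qo b c (- x) = - Qo b c x" by (simp add: Qo_def)
lemma Qo_zero [simp]: "Qo b c 0 = 0" by (simp add: Qo_def)
lemma Qo_scaleR [simp]: "Qo b c (scaleR r x) = scaleR r (Qo b c x)" by (simp add: Qo_def smul_scaleR[symmetric])

lemma R1: "below a J \<Longrightarrow> rho a J = e (insert a J)"
proof (cases "J = {}")
  case False
  assume "below a J"
  then show ?thesis using rho_unfold[OF False, of a] by simp
qed (simp add: rho_empty)

lemma mn_not_below: "J \<noteq> {} \<Longrightarrow> \<not> below (mn J) J"
  by (meson below_def lt_irrefl mn_in)

lemma R2: "J \<noteq> {} \<Longrightarrow> rho (mn J) J = scaleR (1/2) (Qo (mn J) (mn J) (e (J - {mn J})))"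
proof -
  assume ne: "J \<noteq> {}"
  then show ?thesis using mn_not_below[OF ne] rho_unfold[OF ne, of "mn J"] by (simp add: smul_scaleR)
qed

lemma R3: assumes ne: "J \<noteq> {}" and lt: "lt (mn J) a"
  shows "rho a J = - rh (mn J) (rh a (e (J - {mn J}))) + Qo a (mn J) (e (J - {mn J}))"
proof -
  define i where "i = mn J"
  define J' where "J' = J - {i}"
  have nb: "\<not> below a J" using lt mn_in[OF ne] unfolding below_def by (auto dest: lt_asym)
  have ne2: "a \<noteq> i" using lt lt_irrefl by (auto simp: i_def)
  have "app (\<lambda>L. if card L \<le> card J' then rho i L else e (insert i L)) (rho a J') = app (rho i) (rho a J')"
  proof (rule app_cong)
    fix L assume L: "rho a J' L \<noteq> 0"
    show "(if card L \<le> card J' then rho i L else e (insert i L)) = rho i L"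
    proof (cases "card L \<le> card J'")
      case False
      then have "L = insert a J'" using rho_supp[OF L] by auto
      moreover have "below i (insert a J')"
        using below_mn[OF ne] lt by (simp add: below_insert i_def J'_def)
      ultimately show ?thesis using False R1[OF \<open>below i (insert a J')\<close>] by simp
    qed simp
  qed
  then have "rho a J = - app (rho i) (rho a J') + Qm a i J'"
    using nb ne2 rho_unfold[OF ne, of a, folded i_def, folded J'_def] by simp
  then show ?thesis by (simp add: i_def J'_def rh_def)
qed

lemma Q1: assumes ne: "J \<noteq> {}"
  shows "Qm b c J = rh (mn J) (Qo b c (e (J - {mn J})))
     + scaleR (gr (mn J) b) (rh c (e (J - {mn J}))) + scaleR (gr (mn J) c) (rh b (e (J - {mn J})))"
proof -
  have "app (\<lambda>L. if card L \<le> card (J - {mn J}) then rho (mn J) L else 0) (Qm b c (J - {mn J}))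
      = app (rho (mn J)) (Qm b c (J - {mn J}))"
    by (rule app_cong) (auto dest: Qm_supp)
  then show ?thesis using Qm_unfold[OF ne, of b c] by (simp add: rh_def Qo_def smul_scaleR)
qed

lemma eU_add: "eU J x + eU J y = eU J (x + y)"
  by (rule ext) (simp add: eU_def)
lemma eU_diff: "eU J x - eU J y = eU J (x - y)"
  by (rule ext) (simp add: eU_def)
lemma eU_scaleR: "scaleR r (eU J x) = eU J (scaleR r x)"
  by (rule ext) (simp add: eU_def scaleR_fun_def)

lemma Qm_sym: "Qm b c J = Qm c b J"
proof (induction "card J" arbitrary: J rule: less_induct)
  case less
  show ?case
  proof (cases "J = {}")
    case True then show ?thesis by (simp add: Qm_empty sig2_sym)
  next
    case False
    have "card (J - {mn J}) < card J" using card_mn[OF False] by simp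
    then have "Qm b c (J - {mn J}) = Qm c b (J - {mn J})" using less by blast
    then show ?thesis using Q1[OF False, of b c] Q1[OF False, of c b] by (simp add: Qo_def)
  qed
qed

lemma Qo_sym: "Qo b c m = Qo c b m"
proof -
  have "Qm b c = Qm c b" by (rule ext) (rule Qm_sym)
  then show ?thesis by (simp add: Qo_def)
qed

lemma e_mn: "J \<noteq> {} \<Longrightarrow> rh (mn J) (e (J - {mn J})) = e J"
proof -
  assume ne: "J \<noteq> {}"
  show ?thesis using R1[OF below_mn[OF ne]] insert_mn[OF ne] by simp
qed

definition islin :: "('n::finite M \<Rightarrow> 'n M) \<Rightarrow> bool" where
  "islin T \<longleftrightarrow> (\<forall>m. T m = app (\<lambda>L. T (e L)) m)"

lemma islin_app: "islin (app r)"
  unfolding islin_def by simp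
lemma islin_rh [simp]: "islin (rh a)"
  unfolding rh_def by (simp add: islin_app)
lemma islin_Qo [simp]: "islin (Qo b c)"
  unfolding Qo_def by (simp add: islin_app)
lemma islin_comp: assumes l1: "islin T1" and l2: "islin T2" shows "islin (\<lambda>m. T1 (T2 m))"
  unfolding islin_def
proof
  fix m
  have "T1 (T2 m) = T1 (app (\<lambda>L. T2 (e L)) m)" using l2 unfolding islin_def by metis
  also have "\<dots> = app (\<lambda>L'. T1 (e L')) (app (\<lambda>L. T2 (e L)) m)" using l1 unfolding islin_def by blast
  also have "\<dots> = app (\<lambda>L. app (\<lambda>L'. T1 (e L')) (T2 (e L))) m" by (rule app_app)
  also have "\<dots> = app (\<lambda>L. T1 (T2 (e L))) m" using l1 unfolding islin_def by metis
  finally show "T1 (T2 m) = app (\<lambda>L. T1 (T2 (e L))) m" .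
qed
lemma app_add_mat: "app (\<lambda>L. r L + s L) m = app r m + app s m"
proof (rule ext)
  fix K
  have "app (\<lambda>L. r L + s L) m K = (\<Sum>L\<in>UNIV. (r L K + s L K) * m L)"
    unfolding app_def plus_fun_apply ..
  also have "\<dots> = (\<Sum>L\<in>UNIV. r L K * m L + s L K * m L)"
    by (simp only: distrib_right)
  also have "\<dots> = app r m K + app s m K"
    unfolding app_def by (rule sum.distrib)
  finally show "app (\<lambda>L. r L + s L) m K = (app r m + app s m) K" by simp
qed
lemma app_scaleR_mat: "app (\<lambda>L. scaleR c (r L)) m = scaleR c (app r m)"
proof (rule ext)
  fix K
  have "app (\<lambda>L. scaleR c (r L)) m K = (\<Sum>L\<in>UNIV. scaleR c (r L K) * m L)"
    unfolding app_def scaleR_fun_def ..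
  also have "\<dots> = scaleR c (app r m K)"
    unfolding app_def scaleR_sum_right by simp
  finally show "app (\<lambda>L. scaleR c (r L)) m K = scaleR c (app r m) K" by (simp add: scaleR_fun_def)
qed
lemma islin_add: assumes "islin T1" "islin T2" shows "islin (\<lambda>m. T1 m + T2 m)"
  using assms unfolding islin_def app_add_mat by metis
lemma islin_scaleR: assumes "islin T" shows "islin (\<lambda>m. scaleR c (T m))"
  using assms unfolding islin_def app_scaleR_mat by metis
lemma islin_minus: "islin T \<Longrightarrow> islin (\<lambda>m. - T m)"
  using islin_scaleR[of T "-1"] by simp
lemma islin_diff: assumes "islin T1" "islin T2" shows "islin (\<lambda>m. T1 m - T2 m)"
  using islin_add[OF assms(1) islin_minus[OF assms(2)]] unfolding diff_conv_add_uminus .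

lemma islin_eq:
  assumes "islin T1" "islin T2" "\<And>L. m L \<noteq> 0 \<Longrightarrow> T1 (e L) = T2 (e L)"
  shows "T1 m = T2 m"
proof -
  have "T1 m = app (\<lambda>L. T1 (e L)) m" using assms(1) unfolding islin_def by blast
  also have "\<dots> = app (\<lambda>L. T2 (e L)) m" by (rule app_cong) (rule assms(3))
  also have "T2 m = app (\<lambda>L. T2 (e L)) m" using assms(2) unfolding islin_def by blast
  ultimately show ?thesis by simp
qed

section \<open>The three identities\<close>

definition SS :: "'n::finite idx \<Rightarrow> 'n idx \<Rightarrow> 'n M \<Rightarrow> bool" where
  "SS a b m \<longleftrightarrow> rh a (rh b m) + rh b (rh a m) = Qo a b m"
definition DD :: "'n::finite idx \<Rightarrow> 'n idx \<Rightarrow> 'n idx \<Rightarrow> 'n M \<Rightarrow> bool" where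
  "DD z b c m \<longleftrightarrow> rh z (Qo b c m) - Qo b c (rh z m) = scaleR (- gr z b) (rh c m) + scaleR (- gr z c) (rh b m)"
definition EE :: "'n::finite idx \<Rightarrow> 'n idx \<Rightarrow> 'n idx \<Rightarrow> 'n idx \<Rightarrow> 'n M \<Rightarrow> bool" where
  "EE a b c d m \<longleftrightarrow> Qo a b (Qo c d m) - Qo c d (Qo a b m) =
     scaleR (- gr a c) (Qo b d m) + scaleR (- gr a d) (Qo b c m) +
     scaleR (- gr b c) (Qo a d m) + scaleR (- gr b d) (Qo a c m)"

lemma SS_lift: assumes "\<And>L. m L \<noteq> 0 \<Longrightarrow> SS a b (e L)" shows "SS a b m"
  unfolding SS_def
  by (rule islin_eq[OF islin_add[OF islin_comp[OF islin_rh islin_rh] islin_comp[OF islin_rh islin_rh]] islin_Qo])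
     (use assms in \<open>simp add: SS_def\<close>)
lemma DD_lift: assumes "\<And>L. m L \<noteq> 0 \<Longrightarrow> DD z b c (e L)" shows "DD z b c m"
  unfolding DD_def
  by (rule islin_eq[OF islin_diff[OF islin_comp[OF islin_rh islin_Qo] islin_comp[OF islin_Qo islin_rh]]
         islin_add[OF islin_scaleR[OF islin_rh] islin_scaleR[OF islin_rh]]])
     (use assms in \<open>simp add: DD_def\<close>)
lemma EE_lift: assumes "\<And>L. m L \<noteq> 0 \<Longrightarrow> EE a b c d (e L)" shows "EE a b c d m"
  unfolding EE_def
  by (rule islin_eq[OF islin_diff[OF islin_comp[OF islin_Qo islin_Qo] islin_comp[OF islin_Qo islin_Qo]]
        islin_add[OF islin_add[OF islin_add[OF islin_scaleR[OF islin_Qo] islin_scaleR[OF islin_Qo]]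
          islin_scaleR[OF islin_Qo]] islin_scaleR[OF islin_Qo]]])
     (use assms in \<open>simp add: EE_def\<close>)

lemma SS_sym: "SS a b m \<longleftrightarrow> SS b a m"
  unfolding SS_def by (simp add: Qo_sym add.commute)

lemma half_half: "scaleR (1/2) x + scaleR (1/2) x = (x::'a::real_vector)"
  by (simp add: scaleR_add_left[symmetric])

lemma S1: assumes b: "below b L" shows "SS a b (e L)"
proof -
  define K where "K = insert b L"
  have bK: "rh b (e L) = e K" using R1[OF b] by (simp add: K_def)
  have neK: "K \<noteq> {}" by (simp add: K_def)
  have mK: "mn K = b" using mn_insert_below[OF b] by (simp add: K_def)
  have KL: "K - {b} = L" using below_notin[OF b] by (auto simp: K_def)
  consider (bl) "below a K" | (eq) "a = b" | (gt) "\<not> below a K" "a \<noteq> b" by blast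
  then show ?thesis
  proof cases
    case bl
    have ab: "lt a b" using bl unfolding below_def K_def by simp
    have aL: "below a L" using bl unfolding below_def K_def by simp
    define K2 where "K2 = insert a L"
    have ne2: "K2 \<noteq> {}" by (simp add: K2_def)
    have m2: "mn K2 = a" using mn_insert_below[OF aL] by (simp add: K2_def)
    have K2L: "K2 - {a} = L" using below_notin[OF aL] by (auto simp: K2_def)
    have "rh b (rh a (e L)) = rho b K2" using R1[OF aL] by (simp add: K2_def)
    also have "\<dots> = - rh a (rh b (e L)) + Qo b a (e L)"
      using R3[OF ne2, of b] m2 K2L ab by simp
    finally show ?thesis unfolding SS_def by (simp add: Qo_sym)
  next
    case eq
    have "rh b (rh b (e L)) = scaleR (1/2) (Qo b b (e L))"
      using R2[OF neK] bK mK KL by simp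
    then show ?thesis unfolding SS_def eq by (simp add: half_half)
  next
    case gt
    have "lt b a" using notbelow_gt[OF neK gt(1)] gt(2) mK by simp
    then have "rh a (rh b (e L)) = - rh b (rh a (e L)) + Qo a b (e L)"
      using R3[OF neK, of a] bK mK KL by simp
    then show ?thesis unfolding SS_def by simp
  qed
qed

lemma D1: assumes z: "below z L" shows "DD z b c (e L)"
proof -
  define K where "K = insert z L"
  have zK: "rh z (e L) = e K" using R1[OF z] by (simp add: K_def)
  have neK: "K \<noteq> {}" by (simp add: K_def)
  have mK: "mn K = z" using mn_insert_below[OF z] by (simp add: K_def)
  have KL: "K - {z} = L" using below_notin[OF z] by (auto simp: K_def)
  have "Qo b c (rh z (e L)) = rh z (Qo b c (e L)) + scaleR (gr z b) (rh c (e L)) + scaleR (gr z c) (rh b (e L))"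
    using Q1[OF neK, of b c] zK mK KL by simp
  then show ?thesis unfolding DD_def by (simp add: algebra_simps)
qed


definition HH :: "nat \<Rightarrow> 'n::finite itself \<Rightarrow> bool" where
  "HH n (t::'n itself) \<longleftrightarrow> (\<forall>L::'n idx set. card L < n \<longrightarrow>
     (\<forall>a b. SS a b (e L)) \<and> (\<forall>z b c. DD z b c (e L)) \<and> (\<forall>a b c d. EE a b c d (e L)))"

lemma HH_SS:
  assumes H: "HH n TYPE('n::finite)" and low: "\<And>L. m L \<noteq> 0 \<Longrightarrow> card L < n"
  shows "SS xa xb (m :: 'n M)"
proof (rule SS_lift)
  fix L assume "m L \<noteq> 0"
  then have "card L < n" by (rule low)
  then show "SS xa xb (e L)" using H unfolding HH_def by blast
qed
lemma HH_DD:
  assumes H: "HH n TYPE('n::finite)" and low: "\<And>L. m L \<noteq> 0 \<Longrightarrow> card L < n"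
  shows "DD xa xb xc (m :: 'n M)"
proof (rule DD_lift)
  fix L assume "m L \<noteq> 0"
  then have "card L < n" by (rule low)
  then show "DD xa xb xc (e L)" using H unfolding HH_def by blast
qed
lemma HH_EE:
  assumes H: "HH n TYPE('n::finite)" and low: "\<And>L. m L \<noteq> 0 \<Longrightarrow> card L < n"
  shows "EE xa xb xc xd (m :: 'n M)"
proof (rule EE_lift)
  fix L assume "m L \<noteq> 0"
  then have "card L < n" by (rule low)
  then show "EE xa xb xc xd (e L)" using H unfolding HH_def by blast
qed

lemma low_e: "card J' < n \<Longrightarrow> e J' L \<noteq> 0 \<Longrightarrow> card L < n"
  by (simp add: e_apply split: if_splits)
lemma low_Qo: "card J' < n \<Longrightarrow> Qo b c (e J') L \<noteq> 0 \<Longrightarrow> card L < n"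
  using Qm_supp by fastforce
lemma rh_supp: "rh b (e J') L \<noteq> 0 \<Longrightarrow> card L \<le> card J' \<or> L = insert b J'"
  using rho_supp by simp

lemma Qo_eU_empty: "Qo a b (eU {} u) = eU {} (sig2 a b * u)"
  by (simp only: Qo_def app_eU Qm_empty) (simp add: rmul_def eU_def fun_eq_iff)

lemma E_step:
  fixes J :: "'n::finite idx set"
  assumes H: "HH (card J) TYPE('n)"
  shows "EE a b c d (e J)"
proof (cases "J = {}")
  case True
  have ee: "e {} = eU {} (1::'n U)" by (simp add: e_def)
  show ?thesis unfolding EE_def True ee Qo_eU_empty
    by (simp add: eU_diff eU_scaleR eU_add sig2_sig2_comm)
next
  case ne: False
  define i where "i = mn J"
  define Y where "Y = e (J - {i})"
  have cJ: "card (J - {i}) < card J" using card_mn[OF ne] by (simp add: i_def)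
  have QJ: "Qo p q (e J) = rh i (Qo p q Y) + scaleR (gr i p) (rh q Y) + scaleR (gr i q) (rh p Y)" for p q
    using Q1[OF ne, of p q] by (simp add: i_def Y_def)
  have lowY: "\<And>L. Y L \<noteq> 0 \<Longrightarrow> card L < card J" using low_e[OF cJ] by (simp add: Y_def)
  have lowQ: "\<And>L. Qo p q Y L \<noteq> 0 \<Longrightarrow> card L < card J" for p q using low_Qo[OF cJ] by (simp add: Y_def)
  have X1: "Qo a b (rh i (Qo c d Y)) = rh i (Qo a b (Qo c d Y)) + scaleR (gr i a) (rh b (Qo c d Y)) + scaleR (gr i b) (rh a (Qo c d Y))"
    using HH_DD[where xa=i and xb=a and xc=b, OF H lowQ[of c d]] unfolding DD_def by (simp add: algebra_simps)
  have X2: "Qo c d (rh i (Qo a b Y)) = rh i (Qo c d (Qo a b Y)) + scaleR (gr i c) (rh d (Qo a b Y)) + scaleR (gr i d) (rh c (Qo a b Y))"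
    using HH_DD[where xa=i and xb=c and xc=d, OF H lowQ[of a b]] unfolding DD_def by (simp add: algebra_simps)
  have X3: "Qo a b (rh d Y) = rh d (Qo a b Y) - scaleR (gr a d) (rh b Y) - scaleR (gr b d) (rh a Y)"
    using HH_DD[where xa=d and xb=a and xc=b, OF H lowY] gr_antisym[of a d] gr_antisym[of b d] unfolding DD_def by (simp add: algebra_simps)
  have X4: "Qo a b (rh c Y) = rh c (Qo a b Y) - scaleR (gr a c) (rh b Y) - scaleR (gr b c) (rh a Y)"
    using HH_DD[where xa=c and xb=a and xc=b, OF H lowY] gr_antisym[of a c] gr_antisym[of b c] unfolding DD_def by (simp add: algebra_simps)
  have X5: "Qo c d (rh b Y) = rh b (Qo c d Y) + scaleR (gr b c) (rh d Y) + scaleR (gr b d) (rh c Y)"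
    using HH_DD[where xa=b and xb=c and xc=d, OF H lowY] unfolding DD_def by (simp add: algebra_simps)
  have X6: "Qo c d (rh a Y) = rh a (Qo c d Y) + scaleR (gr a c) (rh d Y) + scaleR (gr a d) (rh c Y)"
    using HH_DD[where xa=a and xb=c and xc=d, OF H lowY] unfolding DD_def by (simp add: algebra_simps)
  have X7: "rh i (Qo a b (Qo c d Y)) = rh i (Qo c d (Qo a b Y)) +
     scaleR (- gr a c) (rh i (Qo b d Y)) + scaleR (- gr a d) (rh i (Qo b c Y)) +
     scaleR (- gr b c) (rh i (Qo a d Y)) + scaleR (- gr b d) (rh i (Qo a c Y))"
  proof -
    have "Qo a b (Qo c d Y) = Qo c d (Qo a b Y) +
     (scaleR (- gr a c) (Qo b d Y) + scaleR (- gr a d) (Qo b c Y) +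
     scaleR (- gr b c) (Qo a d Y) + scaleR (- gr b d) (Qo a c Y))"
      using HH_EE[where xa=a and xb=b and xc=c and xd=d, OF H lowY] unfolding EE_def by (simp add: algebra_simps)
    then have "rh i (Qo a b (Qo c d Y)) = rh i (Qo c d (Qo a b Y) +
     (scaleR (- gr a c) (Qo b d Y) + scaleR (- gr a d) (Qo b c Y) +
     scaleR (- gr b c) (Qo a d Y) + scaleR (- gr b d) (Qo a c Y)))" by (rule arg_cong)
    then show ?thesis by (simp add: algebra_simps)
  qed
  have ga: "gr i a = - gr a i" "gr i b = - gr b i" "gr i c = - gr c i" "gr i d = - gr d i"
    using gr_antisym by auto
  show ?thesis unfolding EE_def QJ
    by (simp add: X1 X2 X3 X4 X5 X6 X7 algebra_simps ga)
qed


lemma rh_low_or_below: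
  fixes J :: "'n::finite idx set"
  assumes ne: "J \<noteq> {}" and lt: "lt (mn J) x"
  shows "rh x (e (J - {mn J})) L \<noteq> 0 \<Longrightarrow> card L < card J \<or> below (mn J) L"
proof -
  assume L: "rh x (e (J - {mn J})) L \<noteq> 0"
  have cJ: "card J = Suc (card (J - {mn J}))" using card_mn[OF ne] .
  from rh_supp[OF L] show ?thesis
  proof
    assume "card L \<le> card (J - {mn J})" then show ?thesis using cJ by simp
  next
    assume Lx: "L = insert x (J - {mn J})"
    then show ?thesis using lt below_mn[OF ne] below_insert by blast
  qed
qed

lemma SS_mixed:
  fixes m :: "'n::finite M"
  assumes H: "HH n TYPE('n)" and low: "\<And>L. m L \<noteq> 0 \<Longrightarrow> card L < n \<or> below y L"
  shows "SS x y m"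
proof (rule SS_lift)
  fix L assume "m L \<noteq> 0"
  then have "card L < n \<or> below y L" by (rule low)
  then show "SS x y (e L)" using H S1 unfolding HH_def by blast
qed

lemma DD_mixed:
  fixes m :: "'n::finite M"
  assumes H: "HH n TYPE('n)" and low: "\<And>L. m L \<noteq> 0 \<Longrightarrow> card L < n \<or> below z L"
  shows "DD z b c m"
proof (rule DD_lift)
  fix L assume "m L \<noteq> 0"
  then have "card L < n \<or> below z L" by (rule low)
  then show "DD z b c (e L)" using H D1 unfolding HH_def by blast
qed

lemma double_half: "A + A = B \<Longrightarrow> A = scaleR (1/2) (B::'a::real_vector)"
  by (metis half_half scaleR_add_right add_left_cancel add_right_cancel)
lemma double_scaleR: "scaleR c v + scaleR c v = scaleR (2 * c) (v::'a::real_vector)"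
  by (simp add: scaleR_add_left[symmetric])

lemma S_step:
  fixes J :: "'n::finite idx set"
  assumes H: "HH (card J) TYPE('n)"
  shows "SS a b (e J)"
proof -
  consider (ba) "below b J" | (aa) "below a J" | (nb) "\<not> below a J" "\<not> below b J" by blast
  then show ?thesis
  proof cases
    case ba then show ?thesis by (rule S1)
  next
    case aa then show ?thesis using S1 SS_sym by blast
  next
    case nb
    have ne: "J \<noteq> {}" using nb unfolding below_def by auto
    define i where "i = mn J"
    define Y where "Y = e (J - {i})"
    have cJ: "card (J - {i}) < card J" using card_mn[OF ne] by (simp add: i_def)
    have lowY: "\<And>L. Y L \<noteq> 0 \<Longrightarrow> card L < card J" using low_e[OF cJ] by (simp add: Y_def)
    have eJ: "rh i Y = e J" using e_mn[OF ne] by (simp add: i_def Y_def)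
    have rhiJ: "rh i (e J) = scaleR (1/2) (Qo i i Y)" using R2[OF ne] by (simp add: i_def Y_def)
    have rhxJ: "rh x (e J) = - rh i (rh x Y) + Qo x i Y" if "lt i x" for x
      using R3[OF ne, of x] that by (simp add: i_def Y_def)
    have QJ: "Qo p q (e J) = rh i (Qo p q Y) + scaleR (gr i p) (rh q Y) + scaleR (gr i q) (rh p Y)" for p q
      using Q1[OF ne, of p q] by (simp add: i_def Y_def)
    have mixed: "\<And>L. rh x Y L \<noteq> 0 \<Longrightarrow> card L < card J \<or> below i L" if "lt i x" for x
      using rh_low_or_below[OF ne, of x] that by (simp add: i_def Y_def)
    have ai: "a = i \<or> lt i a" using notbelow_gt[OF ne nb(1)] by (auto simp: i_def)
    have bi: "b = i \<or> lt i b" using notbelow_gt[OF ne nb(2)] by (auto simp: i_def)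
    have case2: "SS x i (e J)" if lx: "lt i x" for x
    proof -
      have d: "rh x (Qo i i Y) = Qo i i (rh x Y) - scaleR (2 * gr x i) (rh i Y)"
        using HH_DD[where xa=x and xb=i and xc=i, OF H lowY] unfolding DD_def
        by (simp add: double_scaleR algebra_simps)
      have s: "rh i (rh i (rh x Y)) = scaleR (1/2) (Qo i i (rh x Y))"
        using SS_mixed[where x=i and y=i, OF H mixed[OF lx]] unfolding SS_def by (rule double_half)
      have g: "gr i x = - gr x i" by (rule gr_antisym)
      show ?thesis unfolding SS_def rhiJ rhxJ[OF lx] QJ
        by (simp add: d s g algebra_simps eJ)
    qed
    consider (ii) "a = i" "b = i" | (bi') "b = i" "lt i a" | (ai') "a = i" "lt i b" | (gg) "lt i a" "lt i b"
      using ai bi by blast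
    then show ?thesis
    proof cases
      case ii
      have d: "rh i (Qo i i Y) = Qo i i (rh i Y)"
        using HH_DD[where xa=i and xb=i and xc=i, OF H lowY] unfolding DD_def by simp
      show ?thesis unfolding SS_def ii rhiJ
        by (simp add: d eJ half_half)
    next
      case bi' then show ?thesis using case2 by simp
    next
      case ai' then show ?thesis using case2 SS_sym by blast
    next
      case gg
      have s1: "rh a (rh i (rh b Y)) = Qo a i (rh b Y) - rh i (rh a (rh b Y))"
        using SS_mixed[where x=a and y=i, OF H mixed[OF gg(2)]] unfolding SS_def by (simp add: algebra_simps)
      have s2: "rh b (rh i (rh a Y)) = Qo b i (rh a Y) - rh i (rh b (rh a Y))"
        using SS_mixed[where x=b and y=i, OF H mixed[OF gg(1)]] unfolding SS_def by (simp add: algebra_simps)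
      have d1: "rh a (Qo b i Y) = Qo b i (rh a Y) - scaleR (gr a b) (rh i Y) - scaleR (gr a i) (rh b Y)"
        using HH_DD[where xa=a and xb=b and xc=i, OF H lowY] unfolding DD_def by (simp add: algebra_simps)
      have d2: "rh b (Qo a i Y) = Qo a i (rh b Y) - scaleR (gr b a) (rh i Y) - scaleR (gr b i) (rh a Y)"
        using HH_DD[where xa=b and xb=a and xc=i, OF H lowY] unfolding DD_def by (simp add: algebra_simps)
      have s3: "rh i (rh a (rh b Y)) = rh i (Qo a b Y) - rh i (rh b (rh a Y))"
      proof -
        have "rh a (rh b Y) = Qo a b Y - rh b (rh a Y)"
          using HH_SS[where xa=a and xb=b, OF H lowY] unfolding SS_def by (simp add: algebra_simps)
        then show ?thesis by simp
      qed
      have g: "gr b a = - gr a b" "gr i a = - gr a i" "gr i b = - gr b i" using gr_antisym by auto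
      show ?thesis unfolding SS_def rhxJ[OF gg(1)] rhxJ[OF gg(2)] QJ
        by (simp add: s1 s2 d1 d2 s3 g algebra_simps)
    qed
  qed
qed


lemma dbl: fixes X Z A B :: "'a::real_vector"
  assumes "X - Z = scaleR (- g) A + scaleR (- h) B + scaleR (- g) A + scaleR (- h) B"
  shows "Z = X + scaleR (2*g) A + scaleR (2*h) B"
proof -
  have "Z = X - (scaleR (- g) A + scaleR (- h) B + scaleR (- g) A + scaleR (- h) B)"
    using assms by (simp add: algebra_simps)
  also have "\<dots> = X + scaleR (2*g) A + scaleR (2*h) B"
    by (simp add: algebra_simps scaleR_add_left[symmetric])
  finally show ?thesis .
qed

lemma D_step:
  fixes J :: "'n::finite idx set"
  assumes H: "HH (card J) TYPE('n)"
  shows "DD z b c (e J)"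
proof (cases "below z J")
  case True then show ?thesis by (rule D1)
next
  case nb: False
  have ne: "J \<noteq> {}" using nb unfolding below_def by auto
  define i where "i = mn J"
  define Y where "Y = e (J - {i})"
  have cJ: "card (J - {i}) < card J" using card_mn[OF ne] by (simp add: i_def)
  have lowY: "\<And>L. Y L \<noteq> 0 \<Longrightarrow> card L < card J" using low_e[OF cJ] by (simp add: Y_def)
  have lowQ: "\<And>L. Qo p q Y L \<noteq> 0 \<Longrightarrow> card L < card J" for p q using low_Qo[OF cJ] by (simp add: Y_def)
  have eJ: "e J = rh i Y" using e_mn[OF ne] by (simp add: i_def Y_def)
  have rhiJ: "rh i (e J) = scaleR (1/2) (Qo i i Y)" using R2[OF ne] by (simp add: i_def Y_def)
  have rhxJ: "rh x (e J) = - rh i (rh x Y) + Qo x i Y" if "lt i x" for x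
    using R3[OF ne, of x] that by (simp add: i_def Y_def)
  have QJ: "Qo p q (e J) = rh i (Qo p q Y) + scaleR (gr i p) (rh q Y) + scaleR (gr i q) (rh p Y)" for p q
    using Q1[OF ne, of p q] by (simp add: i_def Y_def)
  have mixed: "\<And>L. rh x Y L \<noteq> 0 \<Longrightarrow> card L < card J \<or> below i L" if "lt i x" for x
    using rh_low_or_below[OF ne, of x] that by (simp add: i_def Y_def)
  have zi: "z = i \<or> lt i z" using notbelow_gt[OF ne nb] by (auto simp: i_def)
  then show ?thesis
  proof
    assume z: "z = i"
    have s: "rh i (rh i (Qo b c Y)) = scaleR (1/2) (Qo i i (Qo b c Y))"
      using HH_SS[where xa=i and xb=i, OF H lowQ] unfolding SS_def by (rule double_half)
    have ee: "Qo b c (Qo i i Y) = Qo i i (Qo b c Y) + scaleR (2 * gr i b) (Qo i c Y) + scaleR (2 * gr i c) (Qo i b Y)"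
      using HH_EE[where xa=i and xb=i and xc=b and xd=c, OF H lowY] unfolding EE_def
      by (intro dbl) simp
    have f7: "Qo i c Y = rh i (rh c Y) + rh c (rh i Y)"
      using HH_SS[where xa=i and xb=c, OF H lowY] unfolding SS_def by simp
    have f8: "Qo i b Y = rh i (rh b Y) + rh b (rh i Y)"
      using HH_SS[where xa=i and xb=b, OF H lowY] unfolding SS_def by simp
    show ?thesis unfolding DD_def z rhiJ QJ unfolding eJ
      by (simp add: s ee f7 f8 algebra_simps)
  next
    assume lz: "lt i z"
    have f1: "rh z (rh i (Qo b c Y)) = Qo z i (Qo b c Y) - rh i (rh z (Qo b c Y))"
      using HH_SS[where xa=z and xb=i, OF H lowQ] unfolding SS_def by (simp add: algebra_simps)
    have f2: "rh z (Qo b c Y) = Qo b c (rh z Y) - scaleR (gr z b) (rh c Y) - scaleR (gr z c) (rh b Y)"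
      using HH_DD[where xa=z and xb=b and xc=c, OF H lowY] unfolding DD_def by (simp add: algebra_simps)
    have f3: "rh i (Qo b c (rh z Y)) = Qo b c (rh i (rh z Y)) - scaleR (gr i b) (rh c (rh z Y)) - scaleR (gr i c) (rh b (rh z Y))"
      using DD_mixed[where z=i and b=b and c=c, OF H mixed[OF lz]] unfolding DD_def by (simp add: algebra_simps)
    have f4: "Qo z i (Qo b c Y) = Qo b c (Qo z i Y) - scaleR (gr z b) (Qo i c Y) - scaleR (gr z c) (Qo i b Y)
                - scaleR (gr i b) (Qo z c Y) - scaleR (gr i c) (Qo z b Y)"
      using HH_EE[where xa=z and xb=i and xc=b and xd=c, OF H lowY] unfolding EE_def by (simp add: algebra_simps)
    have f5: "Qo z c Y = rh z (rh c Y) + rh c (rh z Y)"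
      using HH_SS[where xa=z and xb=c, OF H lowY] unfolding SS_def by simp
    have f6: "Qo z b Y = rh z (rh b Y) + rh b (rh z Y)"
      using HH_SS[where xa=z and xb=b, OF H lowY] unfolding SS_def by simp
    have f7: "Qo i c Y = rh i (rh c Y) + rh c (rh i Y)"
      using HH_SS[where xa=i and xb=c, OF H lowY] unfolding SS_def by simp
    have f8: "Qo i b Y = rh i (rh b Y) + rh b (rh i Y)"
      using HH_SS[where xa=i and xb=b, OF H lowY] unfolding SS_def by simp
    show ?thesis unfolding DD_def rhxJ[OF lz] QJ unfolding eJ
      by (simp add: f1 f2 f3 f4 f5 f6 f7 f8 algebra_simps)
  qed
qed

theorem SDE_all:
  fixes J :: "'n::finite idx set"
  shows "(\<forall>a b. SS a b (e J)) \<and> (\<forall>z b c. DD z b c (e J)) \<and> (\<forall>a b c d. EE a b c d (e J))"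
proof (induction "card J" arbitrary: J rule: less_induct)
  case less
  have H: "HH (card J) TYPE('n)" unfolding HH_def using less by blast
  show ?case using S_step[OF H] D_step[OF H] E_step[OF H] by blast
qed

theorem SS_all: "SS a b (m::'n::finite M)"
  by (rule SS_lift) (use SDE_all in blast)
theorem DD_all: "DD z b c (m::'n::finite M)"
  by (rule DD_lift) (use SDE_all in blast)
theorem EE_all: "EE a b c d (m::'n::finite M)"
  by (rule EE_lift) (use SDE_all in blast)


section \<open>The representation of U on M\<close>

definition scC :: "complex \<Rightarrow> 'n M \<Rightarrow> 'n M" where
  "scC c m = (\<lambda>K. scaleU c (m K))"

lemma app_scC: "app r (scC c m) = scC c (app r m)"
  unfolding app_def scC_def by (rule ext) (simp add: scaleU_mult_right scaleU_sum_right)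
lemma app_scC_mat: "app (\<lambda>L. scC c (r L)) m = scC c (app r m)"
  unfolding app_def scC_def by (rule ext) (simp add: scaleU_mult_left scaleU_sum_right)
lemma app_id: "app e m = m"
proof (rule ext)
  fix K
  have "app e m K = (\<Sum>L\<in>UNIV. (if L = K then m L else 0))"
    unfolding app_def e_apply by (rule sum.cong) auto
  also have "\<dots> = m K" by simp
  finally show "app e m K = m K" .
qed
lemma app_zero_mat: "app (\<lambda>L. 0) m = 0"
  unfolding app_def by (rule ext) simp

lemma islin_zero: "islin (\<lambda>m. 0)"
  unfolding islin_def using app_zero_mat by (metis zero_fun_def)
lemma islin_id: "islin (\<lambda>m. m)"
  unfolding islin_def using app_id by metis
lemma islin_scC: assumes "islin T" shows "islin (\<lambda>m. scC c (T m))"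
  using assms unfolding islin_def app_scC_mat by metis

lemma islin_app_form: "islin T \<Longrightarrow> T m = app (\<lambda>L. T (e L)) m"
  unfolding islin_def by blast
lemma islin_add_arg: "islin T \<Longrightarrow> T (m1 + m2) = T m1 + T m2"
  by (metis islin_app_form app_add)
lemma islin_scC_arg: "islin T \<Longrightarrow> T (scC c m) = scC c (T m)"
  by (metis islin_app_form app_scC)
lemma islin_rmul_arg: "islin T \<Longrightarrow> T (rmul m u) = rmul (T m) u"
  by (metis islin_app_form app_rmul)
lemma islin_zero_arg: "islin T \<Longrightarrow> T 0 = 0"
  by (metis islin_app_form app_zero)

primrec Rep :: "'n::finite fexpr \<Rightarrow> 'n M \<Rightarrow> 'n M" where
  "Rep (G g) = (case g of OddG a \<Rightarrow> rh a | EvenG a b \<Rightarrow> Qo a b)"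
| "Rep Zero_e = (\<lambda>m. 0)"
| "Rep Onee = (\<lambda>m. m)"
| "Rep (Ad x y) = (\<lambda>m. Rep x m + Rep y m)"
| "Rep (Mu x y) = (\<lambda>m. Rep x (Rep y m))"
| "Rep (Sc c x) = (\<lambda>m. scC c (Rep x m))"

lemma islin_Rep: "islin (Rep x)"
proof (induction x)
  case (G g) then show ?case by (cases g) simp_all
next
  case Zero_e then show ?case unfolding Rep.simps by (rule islin_zero)
next
  case Onee then show ?case by (simp add: islin_id)
next
  case (Ad x y) then show ?case unfolding Rep.simps by (rule islin_add)
next
  case (Mu x y) then show ?case unfolding Rep.simps by (rule islin_comp)
next
  case (Sc c x) then show ?case unfolding Rep.simps by (rule islin_scC)
qed

lemma scC_real: "scC (complex_of_real r) m = scaleR r m"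
  by (simp add: scC_def scaleR_fun_def scaleR_U_def)
lemma scC_neg_gform: "scC (- gform a b) m = scaleR (- gr a b) m"
  by (simp add: gform_gr scC_real[symmetric])

lemma Rep_resp: "ocong x y \<Longrightarrow> Rep x = Rep y"
proof (induction rule: ocong.induct)
  case (add_inv x)
  show ?case by (rule ext) (simp add: scC_def scaleU_minus1 fun_eq_iff)
next
  case (sc_add c x y)
  show ?case by (rule ext) (simp add: scC_def scaleU_add_right fun_eq_iff)
next
  case (sc_plus c d x)
  show ?case by (rule ext) (simp add: scC_def scaleU_add_left fun_eq_iff)
next
  case (sc_sc c d x)
  show ?case by (rule ext) (simp add: scC_def scaleU_scaleU fun_eq_iff)
next
  case (sc_one x)
  show ?case by (rule ext) (simp add: scC_def scaleU_one fun_eq_iff)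
next
  case (distr_l x y z)
  show ?case by (rule ext) (simp add: islin_add_arg[OF islin_Rep])
next
  case (sc_mul_r c x y)
  show ?case by (rule ext) (simp add: islin_scC_arg[OF islin_Rep])
next
  case (rel_sym a b)
  show ?case by (rule ext) (simp add: Qo_sym[of a b])
next
  case (rel_odd_odd a b)
  show ?case by (rule ext) (simp add: SS_all[of a b, unfolded SS_def])
next
  case (rel_odd_even a b c)
  show ?case using DD_all[of a b c] unfolding DD_def
    by (simp add: fun_eq_iff Sb_def scC_neg_gform scC_real[of "-1", simplified])
next
  case (rel_even_even a b c d)
  show ?case using EE_all[of a b c d] unfolding EE_def
    by (simp add: fun_eq_iff Sb_def scC_neg_gform scC_real[of "-1", simplified])
qed (simp_all add: add_ac)

lift_definition RepU :: "'n::finite U \<Rightarrow> 'n M \<Rightarrow> 'n M" is Rep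
  by (rule Rep_resp)

lemma RepU_mult: "RepU (x * y) m = RepU x (RepU y m)"
  by transfer simp
lemma RepU_add: "RepU (x + y) m = RepU x m + RepU y m"
  by transfer simp
lemma RepU_one: "RepU 1 m = m"
  by transfer simp
lemma RepU_zero: "RepU 0 m = 0"
  by transfer simp
lemma RepU_scaleU: "RepU (scaleU c x) m = scC c (RepU x m)"
  by transfer simp
lemma RepU_sig: "RepU (sig a) = rh a"
  by transfer simp
lemma RepU_sig2: "RepU (sig2 a b) = Qo a b"
  by transfer simp
lemma islin_RepU: "islin (RepU x)"
  by transfer (rule islin_Rep)


lemma uspan_0: "0 \<in> uspan S"
  unfolding uspan_def by (rule CollectI, rule exI[of _ "{}"]) simp

lemma uspan_cons:
  assumes v: "v \<in> S" and z: "z \<in> uspan S"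
  shows "scaleU c v + z \<in> uspan S"
proof -
  obtain F c' where F: "finite F" "F \<subseteq> S" "z = (\<Sum>w\<in>F. scaleU (c' w) w)"
    using z unfolding uspan_def by blast
  define c2 where "c2 = (\<lambda>w. if w = v then (if v \<in> F then c' v else 0) + c else c' w)"
  have "scaleU c v + z = (\<Sum>w\<in>insert v F. scaleU (c2 w) w)"
  proof (cases "v \<in> F")
    case True
    have "(\<Sum>w\<in>insert v F. scaleU (c2 w) w) = scaleU (c2 v) v + (\<Sum>w\<in>F - {v}. scaleU (c2 w) w)"
      using True F(1) by (simp add: insert_absorb sum.remove)
    also have "(\<Sum>w\<in>F - {v}. scaleU (c2 w) w) = (\<Sum>w\<in>F - {v}. scaleU (c' w) w)"
      by (rule sum.cong) (auto simp: c2_def)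
    also have "scaleU (c2 v) v = scaleU (c' v) v + scaleU c v"
      using True by (simp add: c2_def scaleU_add_left)
    finally show ?thesis using True F by (simp add: sum.remove add_ac)
  next
    case False
    have "(\<Sum>w\<in>F. scaleU (c2 w) w) = (\<Sum>w\<in>F. scaleU (c' w) w)"
      by (rule sum.cong) (use False in \<open>auto simp: c2_def\<close>)
    then show ?thesis using False F by (simp add: c2_def)
  qed
  then show ?thesis unfolding uspan_def using F v by blast
qed

lemma uspan_induct [consumes 1, case_names zero cons]:
  assumes x: "x \<in> uspan S" and z: "P 0"
    and c: "\<And>v c y. v \<in> S \<Longrightarrow> y \<in> uspan S \<Longrightarrow> P y \<Longrightarrow> P (scaleU c v + y)"
  shows "P x"
proof -
  obtain F cf where F: "finite F" "F \<subseteq> S" "x = (\<Sum>w\<in>F. scaleU (cf w) w)"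
    using x unfolding uspan_def by blast
  have "(\<Sum>w\<in>F. scaleU (cf w) w) \<in> uspan S \<and> P (\<Sum>w\<in>F. scaleU (cf w) w)"
    using F(1,2)
  proof (induction F rule: finite_induct)
    case empty then show ?case using z uspan_0 by simp
  next
    case (insert v F)
    then show ?case using c[of v] uspan_cons[of v S] by simp
  qed
  then show ?thesis using F by simp
qed

lemma uspan_gen: "v \<in> S \<Longrightarrow> v \<in> uspan S"
  using uspan_cons[OF _ uspan_0, of v S 1] by (simp add: scaleU_one)

lemma uspan_add: "x \<in> uspan S \<Longrightarrow> y \<in> uspan S \<Longrightarrow> x + y \<in> uspan S"
proof (induction x rule: uspan_induct)
  case zero then show ?case by simp
next
  case (cons v c x) then show ?case using uspan_cons by (simp add: add.assoc)
qed

lemma uspan_scale: "x \<in> uspan S \<Longrightarrow> scaleU a x \<in> uspan S"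
proof (induction x rule: uspan_induct)
  case zero then show ?case by (simp add: scaleU_zero_right uspan_0)
next
  case (cons v c x) then show ?case using uspan_cons by (simp add: scaleU_add_right scaleU_scaleU)
qed

lemma uspan_minus: "x \<in> uspan S \<Longrightarrow> - x \<in> uspan S"
  using uspan_scale[of x S "-1"] by (simp add: scaleU_minus1)
lemma uspan_diff: "x \<in> uspan S \<Longrightarrow> y \<in> uspan S \<Longrightarrow> x - y \<in> uspan S"
  using uspan_add uspan_minus by (metis diff_conv_add_uminus)

lemma uspan_sum: "(\<And>i. i \<in> A \<Longrightarrow> f i \<in> uspan S) \<Longrightarrow> sum f A \<in> uspan S"
  by (induction A rule: infinite_finite_induct) (auto simp: uspan_0 uspan_add)

lemma uspan_mono: "S \<subseteq> T \<Longrightarrow> x \<in> uspan S \<Longrightarrow> x \<in> uspan T"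
  unfolding uspan_def by blast

lemma uspan_subset: "S \<subseteq> uspan T \<Longrightarrow> x \<in> uspan S \<Longrightarrow> x \<in> uspan T"
proof -
  assume ST: "S \<subseteq> uspan T" and x: "x \<in> uspan S"
  from x show ?thesis
  proof (induction x rule: uspan_induct)
    case zero then show ?case by (rule uspan_0)
  next
    case (cons v c y) then show ?case using ST uspan_add uspan_scale by blast
  qed
qed

definition psi :: "'n::finite U \<Rightarrow> 'n M" where
  "psi x = RepU x (e {})"

lemma rmul_e: "rmul (e J) u = eU J u"
  by (simp add: rmul_def e_def eU_def fun_eq_iff)
lemma rmul_eU: "rmul (eU J x) u = eU J (x * u)"
  by (simp add: rmul_def eU_def fun_eq_iff)
lemma scC_eU: "scC c (eU J x) = eU J (scaleU c x)"
  by (simp add: scC_def eU_def fun_eq_iff scaleU_zero_right)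

lemma psi_Usp: "u \<in> Usp \<Longrightarrow> psi u = eU {} u"
proof (induction rule: Usp.induct)
  case one then show ?case by (simp add: psi_def RepU_one e_def)
next
  case (gen a b) then show ?case by (simp add: psi_def RepU_sig2 Qm_empty)
next
  case (add x y) then show ?case by (simp add: psi_def RepU_add eU_add)
next
  case (mul x y)
  have "psi (x * y) = RepU x (rmul (e {}) y)" using mul by (simp add: psi_def RepU_mult rmul_e)
  also have "\<dots> = rmul (psi x) y" by (simp add: islin_rmul_arg[OF islin_RepU] psi_def)
  finally show ?case using mul by (simp add: rmul_eU)
next
  case (scl x c) then show ?case by (simp add: psi_def RepU_scaleU scC_eU)
qed

lemma psi_mult_Usp: "u \<in> Usp \<Longrightarrow> psi (x * u) = rmul (psi x) u"
proof -
  assume u: "u \<in> Usp"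
  have "psi (x * u) = RepU x (rmul (e {}) u)"
    using psi_Usp[OF u] by (simp add: psi_def RepU_mult rmul_e)
  then show ?thesis by (simp add: islin_rmul_arg[OF islin_RepU] psi_def)
qed

lemma psi_add: "psi (x + y) = psi x + psi y"
  by (simp add: psi_def RepU_add)
lemma psi_scaleU: "psi (scaleU c x) = scC c (psi x)"
  by (simp add: psi_def RepU_scaleU)
lemma psi_zero: "psi 0 = 0"
  by (simp add: psi_def RepU_zero)
lemma psi_sum: "psi (sum f A) = (\<Sum>a\<in>A. psi (f a))"
  by (induction A rule: infinite_finite_induct) (simp_all add: psi_zero psi_add)

definition slist :: "'n::finite idx set \<Rightarrow> 'n idx list" where
  "slist I = map from_nat (sorted_list_of_set (to_nat ` I))"

lemma slist_empty [simp]: "slist {} = []"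
  by (simp add: slist_def)

lemma slist_rec: assumes ne: "I \<noteq> {}" shows "slist I = mn I # slist (I - {mn I})"
proof -
  have fin: "finite (to_nat ` I)" by simp
  have m: "Min (to_nat ` I) = to_nat (mn I)"
    using mn_prop[OF ne] fin by (intro Min_eqI) auto
  have r: "to_nat ` I - {to_nat (mn I)} = to_nat ` (I - {mn I})"
    by (auto simp: inj_eq inj_to_nat)
  show ?thesis unfolding slist_def
    using sorted_list_of_set_nonempty[OF fin] ne m r by simp
qed

lemma slist_props: "set (slist I) = I \<and> distinct (slist I) \<and> length (slist I) = card I"
proof (induction "card I" arbitrary: I rule: less_induct)
  case less
  show ?case
  proof (cases "I = {}")
    case True then show ?thesis by simp
  next
    case False
    have "card (I - {mn I}) < card I" using card_mn[OF False] by simp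
    then have IH: "set (slist (I - {mn I})) = I - {mn I} \<and> distinct (slist (I - {mn I}))
        \<and> length (slist (I - {mn I})) = card (I - {mn I})" using less by blast
    show ?thesis using IH slist_rec[OF False] insert_mn[OF False] card_mn[OF False] by auto
  qed
qed

definition P :: "'n idx list \<Rightarrow> 'n U" where
  "P w = prod_list (map sig w)"

lemma P_Nil [simp]: "P [] = 1" by (simp add: P_def)
lemma P_Cons: "P (a # w) = sig a * P w" by (simp add: P_def)
lemma P_append: "P (v @ w) = P v * P w" by (simp add: P_def)

lemma RepU_P_slist: "RepU (P (slist I)) (e {}) = e I"
proof (induction "card I" arbitrary: I rule: less_induct)
  case less
  show ?case
  proof (cases "I = {}")
    case True then show ?thesis by (simp add: RepU_one)
  next
    case False
    have "card (I - {mn I}) < card I" using card_mn[OF False] by simp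
    then have IH: "RepU (P (slist (I - {mn I}))) (e {}) = e (I - {mn I})" using less by blast
    show ?thesis using IH e_mn[OF False] slist_rec[OF False]
      by (simp add: P_Cons RepU_mult RepU_sig)
  qed
qed

lemma supp_rh: "(\<And>L. m L \<noteq> 0 \<Longrightarrow> card L \<le> k) \<Longrightarrow> rh a m K \<noteq> 0 \<Longrightarrow> card K \<le> Suc k"
proof -
  assume h: "\<And>L. m L \<noteq> 0 \<Longrightarrow> card L \<le> k" and K: "rh a m K \<noteq> 0"
  obtain L where L: "m L \<noteq> 0" "rho a L K \<noteq> 0" using app_supp K unfolding rh_def by blast
  have "card K \<le> card L \<or> K = insert a L" using rho_supp[OF L(2)] .
  moreover have "card (insert a L) \<le> Suc (card L)" by (simp add: card_insert_le_m1)
  ultimately show ?thesis using h[OF L(1)] by auto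
qed

lemma supp_P: "RepU (P v) (e {}) K \<noteq> 0 \<Longrightarrow> card K \<le> length v"
proof (induction v arbitrary: K)
  case Nil then show ?case by (simp add: RepU_one e_apply split: if_splits)
next
  case (Cons a v)
  have "rh a (RepU (P v) (e {})) K \<noteq> 0" using Cons.prems by (simp add: P_Cons RepU_mult RepU_sig)
  then show ?case using supp_rh[of "RepU (P v) (e {})" "length v" a K] Cons.IH by simp
qed

lemma supp_psi_PU: "u \<in> Usp \<Longrightarrow> psi (P v * u) K \<noteq> 0 \<Longrightarrow> card K \<le> length v"
proof -
  assume u: "u \<in> Usp" and K: "psi (P v * u) K \<noteq> 0"
  have "psi (P v) K * u \<noteq> 0" using K by (simp add: psi_mult_Usp[OF u] rmul_def)
  then have "RepU (P v) (e {}) K \<noteq> 0" by (auto simp: psi_def)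
  then show ?thesis by (rule supp_P)
qed

definition Lk :: "nat \<Rightarrow> 'n::finite U set" where
  "Lk k = uspan {P v * u | v u. length v < k \<and> u \<in> Usp}"

lemma supp_psi_Lk: "x \<in> Lk k \<Longrightarrow> psi x K \<noteq> 0 \<Longrightarrow> card K < k"
  unfolding Lk_def
proof (induction x rule: uspan_induct)
  case zero then show ?case by (simp add: psi_zero)
next
  case (cons v c y)
  then obtain w u where v: "v = P w * u" "length w < k" "u \<in> Usp" by blast
  from cons.prems have "psi v K \<noteq> 0 \<or> psi y K \<noteq> 0"
    by (auto simp: psi_add psi_scaleU scC_def scaleU_zero_right)
  then show ?case
  proof
    assume "psi v K \<noteq> 0"
    then show ?thesis using supp_psi_PU[OF v(3)] v by fastforce
  qed (rule cons.IH)
qed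


lemma act2_add: "act2 a b (x + y) = act2 a b x + act2 a b y"
  by (simp add: act2_def algebra_simps)
lemma act2_scaleU: "act2 a b (scaleU c x) = scaleU c (act2 a b x)"
  by (simp add: act2_def scaleU_mult_left scaleU_mult_right scaleU_diff_right)
lemma act2_zero: "act2 a b 0 = 0"
  by (simp add: act2_def)
lemma act2_sum: "act2 a b (sum f A) = (\<Sum>i\<in>A. act2 a b (f i))"
  by (induction A rule: infinite_finite_induct) (simp_all add: act2_zero act2_add)
lemma act2_mult: "act2 a b (x * y) = act2 a b x * y + x * act2 a b y"
  by (simp add: act2_def algebra_simps)
lemma act2_sig: "act2 a b (sig c) = scaleR (gr c a) (sig b) + scaleR (gr c b) (sig a)"
proof -
  have "act2 a b (sig c) = - (sig c * sig2 a b - sig2 a b * sig c)"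
    by (simp add: act2_def)
  also have "\<dots> = scaleR (gr c a) (sig b) + scaleR (gr c b) (sig a)"
    by (simp add: sig_sig2_comm)
  finally show ?thesis .
qed

lemma act2_P: "act2 a b (P w) = (\<Sum>j<length w. scaleR (gr (w!j) a) (P (w[j := b])) + scaleR (gr (w!j) b) (P (w[j := a])))"
proof (induction w)
  case Nil then show ?case by (simp add: act2_def)
next
  case (Cons c w)
  have "act2 a b (P (c # w)) = act2 a b (sig c) * P w + sig c * act2 a b (P w)"
    by (simp add: P_Cons act2_mult)
  also have "\<dots> = scaleR (gr c a) (P (b # w)) + scaleR (gr c b) (P (a # w)) +
      (\<Sum>j<length w. scaleR (gr (w!j) a) (P (c # w[j := b])) + scaleR (gr (w!j) b) (P (c # w[j := a])))"
    by (simp add: Cons.IH act2_sig P_Cons distrib_right sum_distrib_left distrib_left)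
  also have "\<dots> = (\<Sum>j<length (c # w). scaleR (gr ((c # w)!j) a) (P ((c # w)[j := b])) + scaleR (gr ((c # w)!j) b) (P ((c # w)[j := a])))"
    by (simp only: length_Cons sum.lessThan_Suc_shift) simp
  finally show ?case .
qed

section \<open>Filtration pieces\<close>

lemma Lk_gen: "length v < k \<Longrightarrow> u \<in> Usp \<Longrightarrow> P v * u \<in> Lk k"
  unfolding Lk_def by (rule uspan_gen) blast

lemma Lk_mono: "k \<le> k' \<Longrightarrow> x \<in> Lk k \<Longrightarrow> x \<in> Lk k'"
proof -
  assume k: "k \<le> k'" and x: "x \<in> Lk k"
  have "{P v * u |v u. length v < k \<and> u \<in> Usp} \<subseteq> {P v * u |v u. length v < k' \<and> u \<in> Usp}"
    using k by force
  then show ?thesis using x unfolding Lk_def by (rule uspan_mono)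
qed

lemma Lk_rmul: "x \<in> Lk k \<Longrightarrow> u \<in> Usp \<Longrightarrow> x * u \<in> Lk k"
proof -
  assume x: "x \<in> Lk k" and u: "u \<in> Usp"
  from x[unfolded Lk_def] show ?thesis
  proof (induction x rule: uspan_induct)
    case zero then show ?case by (simp add: Lk_def uspan_0)
  next
    case (cons v c y)
    then obtain w u' where v: "v = P w * u'" "length w < k" "u' \<in> Usp" by blast
    have "v * u \<in> Lk k" using v u by (simp add: mult.assoc Lk_gen Usp.mul)
    then have "scaleU c (v * u) + y * u \<in> Lk k"
      using cons.IH unfolding Lk_def by (intro uspan_add uspan_scale)
    then show ?case by (simp add: distrib_right scaleU_mult_left)
  qed
qed

lemma Lk_scaleR: "x \<in> Lk k \<Longrightarrow> scaleR r x \<in> Lk k"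
  unfolding Lk_def scaleR_U_def by (rule uspan_scale)
lemma Lk_add: "x \<in> Lk k \<Longrightarrow> y \<in> Lk k \<Longrightarrow> x + y \<in> Lk k"
  unfolding Lk_def by (rule uspan_add)
lemma Lk_diff: "x \<in> Lk k \<Longrightarrow> y \<in> Lk k \<Longrightarrow> x - y \<in> Lk k"
  unfolding Lk_def by (rule uspan_diff)
lemma Lk_sum: "(\<And>i. i \<in> A \<Longrightarrow> f i \<in> Lk k) \<Longrightarrow> sum f A \<in> Lk k"
  unfolding Lk_def by (rule uspan_sum)
lemma Lk_0: "0 \<in> Lk k"
  unfolding Lk_def by (rule uspan_0)
lemma Lk_scaleU: "x \<in> Lk k \<Longrightarrow> scaleU c x \<in> Lk k"
  unfolding Lk_def by (rule uspan_scale)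

lemma adj_swap: "P (p @ [x, y] @ q) + P (p @ [y, x] @ q) \<in> Lk (length p + 2 + length q)"
proof -
  define k where "k = length p + 2 + length q"
  have "P (p @ [x, y] @ q) + P (p @ [y, x] @ q) = P p * (sig x * sig y + sig y * sig x) * P q"
    by (simp add: P_append P_Cons algebra_simps mult.assoc)
  also have "\<dots> = P p * (sig2 x y * P q)"
    by (simp add: sig_anticomm mult.assoc)
  also have "\<dots> = P (p @ q) * sig2 x y + P p * act2 x y (P q)"
    by (simp add: act2_def P_append algebra_simps mult.assoc)
  also have "\<dots> \<in> Lk k"
  proof (rule Lk_add)
    show "P (p @ q) * sig2 x y \<in> Lk k" by (rule Lk_gen) (auto simp: k_def intro: Usp.gen)
  next
    have "P p * act2 x y (P q) = (\<Sum>j<length q. scaleR (gr (q!j) x) (P (p @ q[j := y]) * 1) + scaleR (gr (q!j) y) (P (p @ q[j := x]) * 1))"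
      by (simp add: act2_P sum_distrib_left distrib_left P_append)
    also have "\<dots> \<in> Lk k"
      by (intro Lk_sum Lk_add Lk_scaleR Lk_gen) (auto simp: k_def intro: Usp.one)
    finally show "P p * act2 x y (P q) \<in> Lk k" .
  qed
  finally show ?thesis by (simp add: k_def)
qed

definition sw :: "nat \<Rightarrow> nat \<Rightarrow> 'a list \<Rightarrow> 'a list" where
  "sw i j w = w[i := w!j, j := w!i]"

lemma length_sw [simp]: "length (sw i j w) = length w"
  by (simp add: sw_def)

lemma sw_adj_decomp:
  assumes "Suc i < length w"
  shows "w = take i w @ [w!i, w!Suc i] @ drop (Suc (Suc i)) w"
    and "sw i (Suc i) w = take i w @ [w!Suc i, w!i] @ drop (Suc (Suc i)) w"
proof -
  show w: "w = take i w @ [w!i, w!Suc i] @ drop (Suc (Suc i)) w"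
    using assms by (simp add: Cons_nth_drop_Suc)
  have gen: "sw (length A) (Suc (length A)) (A @ [x, y] @ B) = A @ [y, x] @ B" for A B and x y :: 'a
    by (simp add: sw_def list_update_append nth_append)
  have li: "length (take i w) = i" using assms by simp
  show "sw i (Suc i) w = take i w @ [w!Suc i, w!i] @ drop (Suc (Suc i)) w"
    using gen[of "take i w" "w!i" "w!Suc i" "drop (Suc (Suc i)) w"] li w by simp
qed

lemma P_sw_adj: "Suc i < length w \<Longrightarrow> P (sw i (Suc i) w) + P w \<in> Lk (length w)"
proof -
  assume a: "Suc i < length w"
  have l: "length w = length (take i w) + 2 + length (drop (Suc (Suc i)) w)" using a by simp
  show ?thesis
    using adj_swap[of "take i w" "w!Suc i" "w!i" "drop (Suc (Suc i)) w"]
    by (subst (2) sw_adj_decomp(1)[OF a], subst sw_adj_decomp(2)[OF a], subst l) simp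
qed

lemma sw_three: "i < j \<Longrightarrow> Suc i < j \<Longrightarrow> j < length w \<Longrightarrow>
  sw i j w = sw i (Suc i) (sw (Suc i) j (sw i (Suc i) w))"
  by (intro nth_equalityI) (auto simp: sw_def nth_list_update)

lemma P_sw: "i < j \<Longrightarrow> j < length w \<Longrightarrow> P (sw i j w) + P w \<in> Lk (length w)"
proof (induction "j - i" arbitrary: i w)
  case 0 then show ?case by simp
next
  case (Suc d)
  show ?case
  proof (cases "j = Suc i")
    case True then show ?thesis using P_sw_adj Suc.prems by simp
  next
    case False
    then have sij: "Suc i < j" using Suc.prems by simp
    define w1 where "w1 = sw i (Suc i) w"
    define w2 where "w2 = sw (Suc i) j w1"
    have l1: "length w1 = length w" "length w2 = length w" by (simp_all add: w1_def w2_def)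
    have A: "P w1 + P w \<in> Lk (length w)" using P_sw_adj[of i w] sij Suc.prems by (simp add: w1_def)
    have B: "P w2 + P w1 \<in> Lk (length w)"
      using Suc.hyps(1)[of "Suc i" w1] Suc.hyps(2) sij Suc.prems l1 by (simp add: w2_def)
    have C: "P (sw i (Suc i) w2) + P w2 \<in> Lk (length w)"
      using P_sw_adj[of i w2] sij Suc.prems l1 by simp
    have eq: "sw i j w = sw i (Suc i) w2" using sw_three[OF Suc.prems(1) sij Suc.prems(2)]
      by (simp add: w1_def w2_def)
    have "P (sw i j w) + P w = (P (sw i (Suc i) w2) + P w2) - (P w2 + P w1) + (P w1 + P w)"
      by (simp add: eq algebra_simps)
    also have "\<dots> \<in> Lk (length w)" by (rule Lk_add[OF Lk_diff[OF C B] A])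
    finally show ?thesis .
  qed
qed

lemma permute_list_transpose:
  "a < length w \<Longrightarrow> b < length w \<Longrightarrow> permute_list (Transposition.transpose a b) w = sw a b w"
  by (intro nth_equalityI) (auto simp: permute_list_def sw_def nth_list_update Transposition.transpose_def)

lemma sw_sym: "sw i j w = sw j i w"
  by (cases "i = j") (auto simp: sw_def list_update_swap)

lemma P_perm:
  assumes "p permutes {..<n}"
  shows "\<forall>w. length w = n \<longrightarrow> P (permute_list p w) - scaleU (of_int (sign p)) (P w) \<in> Lk n"
  using assms finite_lessThan[of n]
proof (induction p rule: permutes_induct)
  case id then show ?case by (simp add: permute_list_def map_nth scaleU_one Lk_0)
next
  case (swap a b p)
  show ?case
  proof (intro allI impI)
    fix w :: "'a idx list" assume lw: "length w = n"
    define t where "t = Transposition.transpose a b"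
    have ab: "a < n" "b < n" using swap by auto
    define w' where "w' = permute_list t w"
    have w'sw: "w' = sw a b w" using permute_list_transpose[of a w b] ab lw by (simp add: w'_def t_def)
    have lw': "length w' = n" using lw by (simp add: w'_def)
    have pl: "permute_list (t \<circ> p) w = permute_list p w'"
      using permute_list_compose[of p w t] \<open>p permutes {..<n}\<close> lw by (simp add: w'_def)
    have sg: "sign (t \<circ> p) = - sign p"
      using sign_compose[OF permutation_swap_id permutes_imp_permutation[OF _ \<open>p permutes {..<n}\<close>]] \<open>a \<noteq> b\<close>
      by (simp add: t_def sign_swap_id)
    have IH: "P (permute_list p w') - scaleU (of_int (sign p)) (P w') \<in> Lk n"
      using swap.IH lw' by blast
    have SW: "P w' + P w \<in> Lk n"
    proof (cases "a < b")
      case True then show ?thesis using P_sw[of a b w] ab lw w'sw by simp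
    next
      case False then have "b < a" using \<open>a \<noteq> b\<close> by simp
      then show ?thesis using P_sw[of b a w] ab lw w'sw sw_sym[of a b w] by simp
    qed
    have "P (permute_list (t \<circ> p) w) - scaleU (of_int (sign (t \<circ> p))) (P w)
       = (P (permute_list p w') - scaleU (of_int (sign p)) (P w')) + scaleU (of_int (sign p)) (P w' + P w)"
      by (simp add: pl sg scaleU_add_right scaleU_minus_left)
    also have "\<dots> \<in> Lk n" by (rule Lk_add[OF IH Lk_scaleU[OF SW]])
    finally show "P (permute_list (Transposition.transpose a b \<circ> p) w) - scaleU (of_int (sign (Transposition.transpose a b \<circ> p))) (P w) \<in> Lk n"
      by (simp add: t_def)
  qed
qed

lemma wedge_alt: "wedge xs = (\<Sum>s\<in>{s. s permutes {..<length xs}}. scaleU (of_int (sign s)) (P (permute_list s xs)))"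
  unfolding wedge_def P_def permute_list_def by (simp add: comp_def)

lemma wedge_top: "wedge w - scaleU (of_nat (fact (length w))) (P w) \<in> Lk (length w)"
proof -
  define S where "S = {s. s permutes {..<length w}}"
  have cS: "card S = fact (length w)" unfolding S_def by (rule card_permutations) simp_all
  have "wedge w - scaleU (of_nat (fact (length w))) (P w) =
     (\<Sum>s\<in>S. scaleU (of_int (sign s)) (P (permute_list s w) - scaleU (of_int (sign s)) (P w)))"
  proof -
    have "(\<Sum>s\<in>S. scaleU (of_int (sign s)) (scaleU (of_int (sign s)) (P w))) = (\<Sum>s\<in>S. scaleU 1 (P w))"
      by (rule sum.cong) (simp_all add: scaleU_scaleU of_int_mult[symmetric])
    also have "\<dots> = scaleU (of_nat (card S)) (P w)"
      by (simp add: scaleU_sum_left[symmetric])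
    finally show ?thesis
      by (simp add: wedge_alt S_def[symmetric] scaleU_diff_right sum_subtractf cS)
  qed
  also have "\<dots> \<in> Lk (length w)"
    using P_perm by (intro Lk_sum Lk_scaleU) (auto simp: S_def)
  finally show ?thesis .
qed


lemma perm_set_finite: "finite {s. s permutes {..<n::nat}}"
  by (rule finite_permutations) simp

lemma wedge_dup:
  assumes ij: "i < length xs" "j < length xs" "i \<noteq> j" and eq: "xs ! i = xs ! j"
  shows "wedge xs = 0"
proof -
  define n where "n = length xs"
  define S where "S = {s. s permutes {..<n}}"
  define t where "t = Transposition.transpose i j"
  define f where "f = (\<lambda>s. scaleU (of_int (sign s)) (P (permute_list s xs)))"
  have w: "wedge xs = sum f S" unfolding wedge_alt f_def S_def n_def ..
  have tp: "t permutes {..<n}" using ij by (simp add: t_def n_def permutes_swap_id)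
  have txs: "permute_list t xs = xs"
  proof -
    have "xs[i := xs ! j, j := xs ! j] = xs" using eq by (metis list_update_id)
    then show ?thesis using permute_list_transpose[of i xs j] ij eq by (simp add: t_def sw_def)
  qed
  have ft: "f (t \<circ> s) = - f s" if s: "s \<in> S" for s
  proof -
    have sp: "s permutes {..<length xs}" using s by (simp add: S_def n_def)
    have "permute_list (t \<circ> s) xs = permute_list s xs"
      using permute_list_compose[OF sp, of t] txs by simp
    moreover have "sign (t \<circ> s) = - sign s"
      using sign_compose[OF permutes_imp_permutation[OF _ tp] permutes_imp_permutation[OF _ sp]] ij
      by (simp add: t_def sign_swap_id)
    ultimately show ?thesis by (simp add: f_def scaleU_minus_left)
  qed
  have "sum (\<lambda>s. f (t \<circ> s)) S = sum f S"
  proof (rule sum.reindex_bij_witness[of S "\<lambda>s. t \<circ> s" "\<lambda>s. t \<circ> s"])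
    fix s assume "s \<in> S"
    show "t \<circ> (t \<circ> s) = s" by (simp add: t_def o_assoc)
    show "t \<circ> s \<in> S" using \<open>s \<in> S\<close> tp by (simp add: S_def permutes_compose)
  qed (use tp in \<open>auto simp: t_def o_assoc S_def permutes_compose\<close>)
  moreover have "sum (\<lambda>s. f (t \<circ> s)) S = - sum f S"
    by (simp add: ft sum_negf)
  ultimately have "sum f S + sum f S = 0" by (metis add.right_inverse)
  then show ?thesis using w U_two_zero by metis
qed

lemma wedge_perm:
  assumes p: "p permutes {..<length v}"
  shows "wedge (permute_list p v) = scaleU (of_int (sign p)) (wedge v)"
proof -
  define S where "S = {s. s permutes {..<length v}}"
  have pp: "permutation p" using permutes_imp_permutation[OF _ p] by simp
  have "wedge (permute_list p v) = (\<Sum>s\<in>S. scaleU (of_int (sign s)) (P (permute_list (p \<circ> s) v)))"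
    unfolding wedge_alt S_def by (rule sum.cong) (simp_all add: permute_list_compose)
  also have "\<dots> = (\<Sum>s\<in>S. scaleU (of_int (sign p) * of_int (sign s)) (P (permute_list s v)))"
  proof (rule sum.reindex_bij_witness[of S "\<lambda>s. inv p \<circ> s" "\<lambda>s. p \<circ> s"])
    fix s assume s: "s \<in> S"
    show "inv p \<circ> (p \<circ> s) = s" using permutes_inv_o(2)[OF p] by (simp add: o_assoc)
    show "p \<circ> s \<in> S" using s p by (simp add: S_def permutes_compose)
    have sp: "permutation s" using s permutes_imp_permutation[of "{..<length v}" s] by (simp add: S_def)
    have "sign p * sign (p \<circ> s) = sign s"
      using sign_compose[OF pp sp] by (simp add: mult.assoc[symmetric])
    then have "of_int (sign p) * of_int (sign (p \<circ> s)) = (of_int (sign s) :: complex)"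
      by (metis of_int_mult)
    then show "scaleU (of_int (sign p) * of_int (sign (p \<circ> s))) (P (permute_list (p \<circ> s) v)) =
               scaleU (of_int (sign s)) (P (permute_list (p \<circ> s) v))" by simp
  next
    fix s assume s: "s \<in> S"
    show "p \<circ> (inv p \<circ> s) = s" using permutes_inv_o(1)[OF p] by (simp add: o_assoc)
    show "inv p \<circ> s \<in> S" using s p by (simp add: S_def permutes_compose permutes_inv)
  qed
  also have "\<dots> = scaleU (of_int (sign p)) (wedge v)"
    unfolding wedge_alt S_def by (simp add: scaleU_sum_right scaleU_scaleU)
  finally show ?thesis .
qed

definition wI :: "'n::finite idx set \<Rightarrow> 'n U" where
  "wI I = wedge (slist I)"

lemma card_idx: "card (UNIV :: 'n::finite idx set) = 2 * card (UNIV :: 'n set)"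
proof -
  have "card ((UNIV::'n set) <+> (UNIV::'n set)) = card (UNIV::'n set) + card (UNIV::'n set)"
    by (rule card_Plus) simp_all
  then show ?thesis by simp
qed

lemma distinct_len: "distinct (xs :: 'n::finite idx list) \<Longrightarrow> length xs \<le> 2 * card (UNIV :: 'n set)"
proof -
  assume d: "distinct xs"
  have "length xs = card (set xs)" using distinct_card[OF d] by simp
  also have "\<dots> \<le> card (UNIV :: 'n idx set)" by (rule card_mono) simp_all
  also have "\<dots> = 2 * card (UNIV :: 'n set)" by (rule card_idx)
  finally show ?thesis .
qed

lemma wedge_in_span: "wedge (xs :: 'n::finite idx list) \<in> uspan (range wI)"
proof (cases "distinct xs")
  case True
  define ys where "ys = slist (set xs)"
  have dy: "distinct ys" "set ys = set xs" using slist_props[of "set xs"] by (simp_all add: ys_def)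
  have "mset xs = mset ys" using set_eq_iff_mset_eq_distinct[OF True dy(1)] dy(2) by simp
  then obtain p where p: "p permutes {..<length ys}" "permute_list p ys = xs"
    by (rule mset_eq_permutation)
  have "wedge xs = scaleU (of_int (sign p)) (wI (set xs))"
    using wedge_perm[OF p(1)] p(2) by (simp add: wI_def ys_def)
  then show ?thesis by (simp add: uspan_scale uspan_gen)
next
  case False
  then obtain i j where "i < length xs" "j < length xs" "i \<noteq> j" "xs ! i = xs ! j"
    using distinct_conv_nth by blast
  then show ?thesis using wedge_dup uspan_0 by metis
qed

lemma wI_Omega: "wI I \<in> (Omega :: 'n::finite U set)"
proof -
  have "length (slist I) \<le> 2 * card (UNIV :: 'n set)"
    using distinct_len slist_props by blast
  then show ?thesis unfolding wI_def Omega_def by (intro uspan_gen) blast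
qed

lemma Omega_span: "y \<in> (Omega :: 'n::finite U set) \<Longrightarrow> y \<in> uspan (range wI)"
  unfolding Omega_def by (rule uspan_subset[rotated]) (auto intro: wedge_in_span)

lemma span_repr:
  fixes f :: "'a::finite \<Rightarrow> 'n U"
  shows "y \<in> uspan (range f) \<Longrightarrow> \<exists>c. y = (\<Sum>I\<in>UNIV. scaleU (c I) (f I))"
proof (induction y rule: uspan_induct)
  case zero show ?case by (rule exI[of _ "\<lambda>_. 0"]) (simp add: scaleU_zero_left)
next
  case (cons v c y)
  obtain I0 where v: "v = f I0" using cons.hyps(1) by blast
  obtain c' where y: "y = (\<Sum>I\<in>UNIV. scaleU (c' I) (f I))" using cons.IH by blast
  have d: "(\<Sum>I\<in>UNIV. scaleU (if I = I0 then c else 0) (f I)) = scaleU c (f I0)"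
  proof -
    have "(\<Sum>I\<in>UNIV. scaleU (if I = I0 then c else 0) (f I)) = (\<Sum>I\<in>UNIV. (if I = I0 then scaleU c (f I) else 0))"
      by (rule sum.cong) (simp_all add: scaleU_zero_left)
    then show ?thesis by simp
  qed
  have "(\<Sum>I\<in>UNIV. scaleU (c' I + (if I = I0 then c else 0)) (f I))
      = y + (\<Sum>I\<in>UNIV. scaleU (if I = I0 then c else 0) (f I))"
    unfolding y scaleU_add_left sum.distrib ..
  also have "\<dots> = scaleU c v + y" by (simp add: d v add.commute)
  finally show ?case by metis
qed

section \<open>Spanning\<close>

definition Sp :: "'n::finite U set" where
  "Sp = uspan {w * u | w u. w \<in> Omega \<and> u \<in> Usp}"

lemma PU_Sp: "u \<in> Usp \<Longrightarrow> P v * u \<in> (Sp :: 'n::finite U set)"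
proof (induction "length v" arbitrary: v u rule: less_induct)
  case less
  define k where "k = length v"
  define l where "l = wedge v - scaleU (of_nat (fact k)) (P v)"
  have l: "l \<in> Lk k" using wedge_top[of v] by (simp add: l_def k_def)
  have fk: "(of_nat (fact k) :: complex) \<noteq> 0" by simp
  have Pv: "P v = scaleU (1 / of_nat (fact k)) (wedge v - l)"
    using fk by (simp add: l_def scaleU_scaleU scaleU_one)
  have wu: "wedge v * u \<in> Sp"
  proof (cases "k \<le> 2 * card (UNIV :: 'n set)")
    case True
    then have "wedge v \<in> Omega" unfolding Omega_def k_def by (intro uspan_gen) blast
    then show ?thesis unfolding Sp_def using less.prems by (intro uspan_gen) blast
  next
    case False
    then have "\<not> distinct v" using distinct_len[of v] by (auto simp: k_def)
    then obtain i j where "i < length v" "j < length v" "i \<noteq> j" "v ! i = v ! j"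
      using distinct_conv_nth by blast
    then have "wedge v = 0" by (rule wedge_dup)
    then show ?thesis by (simp add: Sp_def uspan_0)
  qed
  have lu: "l * u \<in> Sp"
  proof -
    have "l * u \<in> Lk k" using Lk_rmul[OF l less.prems] .
    moreover have "{P w * u' | w u'. length w < k \<and> u' \<in> Usp} \<subseteq> (Sp :: 'n U set)"
    proof
      fix z :: "'n U" assume "z \<in> {P w * u' | w u'. length w < k \<and> u' \<in> Usp}"
      then obtain w u' where z: "z = P w * u'" "length w < k" "u' \<in> Usp" by blast
      show "z \<in> Sp" using less.hyps[of w u'] z by (simp add: k_def)
    qed
    ultimately show ?thesis unfolding Lk_def Sp_def by (rule uspan_subset[rotated])
  qed
  have "P v * u = scaleU (1 / of_nat (fact k)) (wedge v * u - l * u)"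
    by (simp add: Pv scaleU_mult_left left_diff_distrib)
  then show ?case using wu lu unfolding Sp_def by (simp add: uspan_scale uspan_diff)
qed

lemma PW_mult: "x \<in> uspan (range P) \<Longrightarrow> y \<in> uspan (range P) \<Longrightarrow> x * y \<in> uspan (range P)"
proof (induction x rule: uspan_induct)
  case zero then show ?case by (simp add: uspan_0)
next
  case (cons v c x)
  obtain w where v: "v = P w" using cons.hyps(1) by blast
  have "P w * y \<in> uspan (range P)" using cons.prems
  proof (induction y rule: uspan_induct)
    case zero then show ?case by (simp add: uspan_0)
  next
    case (cons v' c' y')
    obtain w' where v': "v' = P w'" using cons.hyps(1) by blast
    have "P w * (scaleU c' v' + y') = scaleU c' (P (w @ w')) + P w * y'"
      by (simp add: v' distrib_left scaleU_mult_right P_append)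
    then show ?case using cons.IH by (simp add: uspan_cons)
  qed
  then show ?case using cons.IH cons.prems
    by (simp add: v distrib_right scaleU_mult_left uspan_add uspan_scale)
qed

lemma all_in_PW: "(x :: 'n::finite U) \<in> uspan (range P)"
proof (induction x rule: U.abs_induct)
  case (1 y)
  show ?case
  proof (induction y)
    case (G g)
    show ?case
    proof (cases g)
      case (OddG a)
      have "abs_U (G g) = P [a]" by (simp add: OddG P_Cons sig.abs_eq)
      then show ?thesis by (metis uspan_gen rangeI)
    next
      case (EvenG a b)
      have "abs_U (G g) = P [a, b] + P [b, a]"
        by (simp add: EvenG P_Cons sig2.abs_eq[symmetric] sig_anticomm)
      then show ?thesis by (metis uspan_gen rangeI uspan_add)
    qed
  next
    case Zero_e then show ?case by (simp add: zero_U.abs_eq[symmetric] uspan_0)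
  next
    case Onee
    have "abs_U Onee = P []" by (simp add: one_U.abs_eq[symmetric])
    then show ?case by (metis uspan_gen rangeI)
  next
    case (Ad x y) then show ?case by (simp add: plus_U.abs_eq[symmetric] uspan_add)
  next
    case (Mu x y) then show ?case by (simp add: times_U.abs_eq[symmetric] PW_mult)
  next
    case (Sc c x) then show ?case by (simp add: scaleU.abs_eq[symmetric] uspan_scale)
  qed
qed

lemma all_in_Sp: "(x :: 'n::finite U) \<in> Sp"
proof -
  have "range P \<subseteq> (Sp :: 'n U set)"
    using PU_Sp[OF Usp.one] by auto
  then have "range P \<subseteq> uspan {w * u | w u. w \<in> (Omega :: 'n U set) \<and> u \<in> Usp}"
    by (simp add: Sp_def)
  from uspan_subset[OF this all_in_PW] show ?thesis by (simp add: Sp_def)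
qed


section \<open>Omega is sp(2n)-invariant\<close>

lemma permute_list_update:
  assumes s: "s permutes {..<length xs}" and i: "i < length xs"
  shows "(permute_list s xs)[i := c] = permute_list s (xs[s i := c])"
proof (rule nth_equalityI)
  show "length ((permute_list s xs)[i := c]) = length (permute_list s (xs[s i := c]))" by simp
next
  fix k assume k: "k < length ((permute_list s xs)[i := c])"
  then have k': "k < length xs" by simp
  have s': "s permutes {..<length (xs[s i := c])}" using s by simp
  have sk: "s k < length xs" using permutes_in_image[OF s] k' by simp
  have inj: "s k = s i \<longleftrightarrow> k = i" using permutes_inj[OF s] by (auto dest: injD)
  have si: "s i < length xs" using permutes_in_image[OF s] i by simp
  have inj2: "s i = s k \<longleftrightarrow> i = k" using inj by auto
  show "(permute_list s xs)[i := c] ! k = permute_list s (xs[s i := c]) ! k"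
    using k' sk inj inj2 i si by (simp add: permute_list_nth[OF s'] permute_list_nth[OF s] nth_list_update)
qed

lemma scaleU_scaleR_comm: "scaleU c (scaleR r x) = scaleR r (scaleU c (x::'n U))"
  by (simp add: scaleR_U_def scaleU_scaleU mult.commute)

lemma act2_wedge:
  "act2 a b (wedge xs) = (\<Sum>j<length xs. scaleR (gr (xs!j) a) (wedge (xs[j := b])) + scaleR (gr (xs!j) b) (wedge (xs[j := a])))"
proof -
  define n where "n = length xs"
  define S where "S = {s. s permutes {..<n}}"
  define F where "F = (\<lambda>s j. scaleR (gr (xs!j) a) (P (permute_list s (xs[j := b]))) +
                             scaleR (gr (xs!j) b) (P (permute_list s (xs[j := a]))))"
  have step: "act2 a b (P (permute_list s xs)) = (\<Sum>j<n. F s j)" if s: "s \<in> S" for s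
  proof -
    have sp: "s permutes {..<length xs}" using s by (simp add: S_def n_def)
    have "act2 a b (P (permute_list s xs)) = (\<Sum>i<n. F s (s i))"
      unfolding act2_P F_def n_def
      by (rule sum.cong) (simp_all add: permute_list_nth[OF sp] permute_list_update[OF sp])
    also have "\<dots> = (\<Sum>j<n. F s j)"
      by (rule sum.reindex_bij_betw) (use sp in \<open>simp add: n_def permutes_imp_bij\<close>)
    finally show ?thesis .
  qed
  have "act2 a b (wedge xs) = (\<Sum>s\<in>S. scaleU (of_int (sign s)) (\<Sum>j<n. F s j))"
    unfolding wedge_alt act2_sum act2_scaleU S_def[symmetric] n_def[symmetric]
    by (rule sum.cong) (simp_all add: step)
  also have "\<dots> = (\<Sum>j<n. \<Sum>s\<in>S. scaleU (of_int (sign s)) (F s j))"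
    by (simp add: scaleU_sum_right sum.swap[of _ S])
  also have "\<dots> = (\<Sum>j<n. scaleR (gr (xs!j) a) (wedge (xs[j := b])) + scaleR (gr (xs!j) b) (wedge (xs[j := a])))"
    by (rule sum.cong) (simp_all add: F_def wedge_alt S_def n_def scaleU_add_right sum.distrib
        scaleU_scaleR_comm scaleR_sum_right)
  finally show ?thesis by (simp add: n_def)
qed

lemma act2_Omega: "y \<in> (Omega :: 'n::finite U set) \<Longrightarrow> act2 a b y \<in> Omega"
proof -
  assume y: "y \<in> Omega"
  from y[unfolded Omega_def] show ?thesis
  proof (induction y rule: uspan_induct)
    case zero then show ?case by (simp add: act2_zero Omega_def uspan_0)
  next
    case (cons v c y)
    then obtain xs where v: "v = wedge xs" "length xs \<le> 2 * card (UNIV :: 'n set)" by blast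
    have w: "wedge (xs[j := d]) \<in> (Omega :: 'n U set)" for j d
      unfolding Omega_def using v(2) by (intro uspan_gen) force
    have "act2 a b v \<in> Omega" unfolding v(1) act2_wedge
      unfolding Omega_def scaleR_U_def
      by (intro uspan_sum uspan_add uspan_scale) (use w in \<open>simp_all add: Omega_def\<close>)
    then show ?case using cons.IH unfolding Omega_def
      by (simp add: act2_add act2_scaleU uspan_add uspan_scale)
  qed
qed

section \<open>Triangularity\<close>

lemma fun_sum_apply: "(sum f A) x = (\<Sum>a\<in>A. f a x)"
  by (induction A rule: infinite_finite_induct) simp_all

lemma scC_e_apply: "scC c (e I) K = (if K = I then scaleU c 1 else 0)"
  by (simp add: scC_def e_apply scaleU_zero_right)

lemma psi_wI_top:
  assumes K: "card I \<le> card K"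
  shows "psi (wI I) K = (if K = I then scaleU (of_nat (fact (card I))) 1 else 0)"
proof -
  define w where "w = slist I"
  have lw: "length w = card I" using slist_props[of I] by (simp add: w_def)
  define l where "l = wedge w - scaleU (of_nat (fact (card I))) (P w)"
  have l: "l \<in> Lk (card I)" using wedge_top[of w] lw by (simp add: l_def)
  have pl: "psi l K = 0" using supp_psi_Lk[OF l] K by fastforce
  have "wI I = l + scaleU (of_nat (fact (card I))) (P w)" by (simp add: l_def wI_def w_def)
  then have "psi (wI I) = psi l + scC (of_nat (fact (card I))) (psi (P w))"
    by (simp add: psi_add psi_scaleU)
  moreover have "psi (P w) = e I" by (simp add: psi_def RepU_P_slist w_def)
  ultimately have "psi (wI I) K = psi l K + scC (of_nat (fact (card I))) (e I) K" by simp
  then show ?thesis using pl by (simp add: scC_e_apply)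
qed

lemma triangular:
  fixes v :: "'n::finite idx set \<Rightarrow> 'n U"
  assumes vU: "\<And>I. v I \<in> Usp" and z: "(\<Sum>I\<in>UNIV. wI I * v I) = 0"
  shows "v I = 0"
proof (rule ccontr)
  assume nz: "v I \<noteq> 0"
  define N where "N = {I. v I \<noteq> 0}"
  have fN: "finite N" by simp
  have neN: "card ` N \<noteq> {}" using nz by (auto simp: N_def)
  obtain I0 where I0: "I0 \<in> N" "card I0 = Max (card ` N)"
    using Max_in[OF finite_imageI[OF fN] neN] by auto
  have maxc: "v J \<noteq> 0 \<Longrightarrow> card J \<le> card I0" for J
    using I0(2) fN by (auto simp: N_def)
  have "psi (\<Sum>I\<in>UNIV. wI I * v I) I0 = (\<Sum>I\<in>UNIV. psi (wI I) I0 * v I)"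
    by (simp add: psi_sum psi_mult_Usp[OF vU] rmul_def fun_sum_apply)
  also have "\<dots> = (\<Sum>I\<in>UNIV. if I = I0 then scaleU (of_nat (fact (card I0))) (v I0) else 0)"
  proof (rule sum.cong)
    fix J :: "'n idx set"
    show "psi (wI J) I0 * v J = (if J = I0 then scaleU (of_nat (fact (card I0))) (v I0) else 0)"
    proof (cases "v J = 0")
      case True
      then show ?thesis using I0(1) by (auto simp: N_def)
    next
      case False
      then have "card J \<le> card I0" by (rule maxc)
      then show ?thesis using psi_wI_top[of J I0]
        by (auto simp: scaleU_mult_left)
    qed
  qed simp
  also have "\<dots> = scaleU (of_nat (fact (card I0))) (v I0)" by simp
  finally have "scaleU (of_nat (fact (card I0))) (v I0) = 0" using z by (simp add: psi_zero)
  then have "v I0 = 0" by (rule scaleU_inj[rotated]) simp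
  then show False using I0(1) by (simp add: N_def)
qed


definition cspan :: "('x \<Rightarrow> complex) set \<Rightarrow> ('x \<Rightarrow> complex) set" where
  "cspan R = {f. \<exists>F c. finite F \<and> F \<subseteq> R \<and> f = (\<lambda>p. \<Sum>r\<in>F. c r * r p)}"

lemma RelSp_cspan: "RelSp A B = cspan (bilin_rels A B)"
  unfolding RelSp_def cspan_def ..

lemma cspan_0: "(\<lambda>p. 0) \<in> cspan R"
  unfolding cspan_def by (rule CollectI, rule exI[of _ "{}"]) simp

lemma cspan_cons:
  assumes v: "v \<in> R" and z: "z \<in> cspan R"
  shows "(\<lambda>p. c * v p + z p) \<in> cspan R"
proof -
  obtain F c' where F: "finite F" "F \<subseteq> R" "z = (\<lambda>p. \<Sum>w\<in>F. c' w * w p)"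
    using z unfolding cspan_def by blast
  define c2 where "c2 = (\<lambda>w. if w = v then (if v \<in> F then c' v else 0) + c else c' w)"
  have "(\<lambda>p. c * v p + z p) = (\<lambda>p. \<Sum>w\<in>insert v F. c2 w * w p)"
  proof (rule ext)
    fix p
    show "c * v p + z p = (\<Sum>w\<in>insert v F. c2 w * w p)"
    proof (cases "v \<in> F")
      case True
      have "(\<Sum>w\<in>insert v F. c2 w * w p) = c2 v * v p + (\<Sum>w\<in>F - {v}. c2 w * w p)"
        using True F(1) by (simp add: insert_absorb sum.remove)
      also have "(\<Sum>w\<in>F - {v}. c2 w * w p) = (\<Sum>w\<in>F - {v}. c' w * w p)"
        by (rule sum.cong) (auto simp: c2_def)
      also have "c2 v * v p = c' v * v p + c * v p"
        using True by (simp add: c2_def distrib_right)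
      finally show ?thesis using True F by (simp add: sum.remove add_ac)
    next
      case False
      have "(\<Sum>w\<in>F. c2 w * w p) = (\<Sum>w\<in>F. c' w * w p)"
        by (rule sum.cong) (use False in \<open>auto simp: c2_def\<close>)
      then show ?thesis using False F by (simp add: c2_def)
    qed
  qed
  then show ?thesis unfolding cspan_def using F v by blast
qed

lemma cspan_induct [consumes 1, case_names zero cons]:
  assumes x: "x \<in> cspan R" and z: "Q (\<lambda>p. 0)"
    and c: "\<And>v c y. v \<in> R \<Longrightarrow> y \<in> cspan R \<Longrightarrow> Q y \<Longrightarrow> Q (\<lambda>p. c * v p + y p)"
  shows "Q x"
proof -
  obtain F cf where F: "finite F" "F \<subseteq> R" "x = (\<lambda>p. \<Sum>w\<in>F. cf w * w p)"
    using x unfolding cspan_def by blast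
  have "(\<lambda>p. \<Sum>w\<in>F. cf w * w p) \<in> cspan R \<and> Q (\<lambda>p. \<Sum>w\<in>F. cf w * w p)"
    using F(1,2)
  proof (induction F rule: finite_induct)
    case empty then show ?case using z cspan_0 by simp
  next
    case (insert v F)
    then show ?case using c[of v] cspan_cons[of v R] by simp
  qed
  then show ?thesis using F by simp
qed

lemma cspan_gen: "v \<in> R \<Longrightarrow> v \<in> cspan R"
  using cspan_cons[OF _ cspan_0, of v R 1] by simp

lemma cspan_add: "x \<in> cspan R \<Longrightarrow> y \<in> cspan R \<Longrightarrow> (\<lambda>p. x p + y p) \<in> cspan R"
proof (induction x rule: cspan_induct)
  case zero then show ?case by simp
next
  case (cons v c x)
  have "(\<lambda>p. c * v p + (x p + y p)) \<in> cspan R" using cons cspan_cons by blast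
  then show ?case by (simp add: add.assoc)
qed

lemma cspan_scale: "x \<in> cspan R \<Longrightarrow> (\<lambda>p. a * x p) \<in> cspan R"
proof (induction x rule: cspan_induct)
  case zero then show ?case by (simp add: cspan_0)
next
  case (cons v c x)
  have "(\<lambda>p. (a * c) * v p + a * x p) \<in> cspan R" using cons cspan_cons by blast
  then show ?case by (simp add: distrib_left mult.assoc)
qed

lemma cspan_neg: "x \<in> cspan R \<Longrightarrow> (\<lambda>p. - x p) \<in> cspan R"
  using cspan_scale[of x R "-1"] by simp
lemma cspan_diff: assumes "x \<in> cspan R" "y \<in> cspan R" shows "(\<lambda>p. x p - y p) \<in> cspan R"
  using cspan_add[OF assms(1) cspan_neg[OF assms(2)]] unfolding diff_conv_add_uminus .

lemma cspan_sum: "(\<And>i. i \<in> T \<Longrightarrow> g i \<in> cspan R) \<Longrightarrow> (\<lambda>p. \<Sum>i\<in>T. g i p) \<in> cspan R"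
proof (induction T rule: infinite_finite_induct)
  case (infinite T) then show ?case by (simp add: cspan_0)
next
  case empty then show ?case by (simp add: cspan_0)
next
  case (insert i T)
  then show ?case using cspan_add[of "g i" R "\<lambda>p. \<Sum>i\<in>T. g i p"] by simp
qed

lemma cspan_eq_trans: "(\<lambda>p. f p - g p) \<in> cspan R \<Longrightarrow> (\<lambda>p. g p - h p) \<in> cspan R \<Longrightarrow> (\<lambda>p. f p - h p) \<in> cspan R"
  using cspan_add[of "\<lambda>p. f p - g p" R "\<lambda>p. g p - h p"] by simp

definition fs :: "('x \<Rightarrow> complex) \<Rightarrow> bool" where
  "fs f \<longleftrightarrow> finite {p. f p \<noteq> 0}"

definition Phi :: "('n U \<times> 'n U \<Rightarrow> complex) \<Rightarrow> 'n U" where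
  "Phi f = (\<Sum>p\<in>{p. f p \<noteq> 0}. scaleU (f p) (snd p * fst p))"

lemma Phi_sup: assumes S: "finite S" "{p. f p \<noteq> 0} \<subseteq> S"
  shows "Phi f = (\<Sum>p\<in>S. scaleU (f p) (snd p * fst p))"
  unfolding Phi_def by (rule sum.mono_neutral_left) (use S in \<open>auto simp: scaleU_zero_left\<close>)

lemma fs_add: "fs f \<Longrightarrow> fs g \<Longrightarrow> fs (\<lambda>p. f p + g p)"
  unfolding fs_def by (rule finite_subset[of _ "{p. f p \<noteq> 0} \<union> {p. g p \<noteq> 0}"]) auto
lemma fs_scale: "fs f \<Longrightarrow> fs (\<lambda>p. c * f p)"
  unfolding fs_def by (rule finite_subset[of _ "{p. f p \<noteq> 0}"]) auto
lemma fs_neg: "fs f \<Longrightarrow> fs (\<lambda>p. - f p)"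
  unfolding fs_def by simp
lemma fs_diff: assumes "fs f" "fs g" shows "fs (\<lambda>p. f p - g p)"
  using fs_add[OF assms(1) fs_neg[OF assms(2)]] unfolding diff_conv_add_uminus .
lemma fs_delta: "fs (delta x y)"
  unfolding fs_def delta_def by (rule finite_subset[of _ "{(x, y)}"]) auto
lemma fs_zero: "fs (\<lambda>p. 0)"
  unfolding fs_def by simp
lemma fs_sum: "(\<And>i. i \<in> T \<Longrightarrow> fs (g i)) \<Longrightarrow> fs (\<lambda>p. \<Sum>i\<in>T. g i p)"
proof (induction T rule: infinite_finite_induct)
  case (infinite T) then show ?case by (simp add: fs_zero)
next
  case empty then show ?case by (simp add: fs_zero)
next
  case (insert i T) then show ?case using fs_add[of "g i" "\<lambda>p. \<Sum>i\<in>T. g i p"] by simp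
qed

lemma Phi_add: assumes "fs f" "fs g" shows "Phi (\<lambda>p. f p + g p) = Phi f + Phi g"
proof -
  define S where "S = {p. f p \<noteq> 0} \<union> {p. g p \<noteq> 0}"
  have S: "finite S" using assms by (simp add: S_def fs_def)
  have "Phi (\<lambda>p. f p + g p) = (\<Sum>p\<in>S. scaleU (f p + g p) (snd p * fst p))"
    by (rule Phi_sup[OF S]) (auto simp: S_def)
  also have "\<dots> = (\<Sum>p\<in>S. scaleU (f p) (snd p * fst p)) + (\<Sum>p\<in>S. scaleU (g p) (snd p * fst p))"
    by (simp add: scaleU_add_left sum.distrib)
  also have "\<dots> = Phi f + Phi g"
    by (simp add: Phi_sup[OF S, of f] Phi_sup[OF S, of g] S_def subset_iff)
  finally show ?thesis .
qed

lemma Phi_scale: assumes "fs f" shows "Phi (\<lambda>p. c * f p) = scaleU c (Phi f)"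
proof -
  define S where "S = {p. f p \<noteq> 0}"
  have S: "finite S" using assms by (simp add: S_def fs_def)
  have "Phi (\<lambda>p. c * f p) = (\<Sum>p\<in>S. scaleU (c * f p) (snd p * fst p))"
    by (rule Phi_sup[OF S]) (auto simp: S_def)
  also have "\<dots> = scaleU c (Phi f)"
    by (simp add: Phi_sup[OF S, of f] S_def scaleU_sum_right scaleU_scaleU)
  finally show ?thesis .
qed

lemma Phi_neg: "fs f \<Longrightarrow> Phi (\<lambda>p. - f p) = - Phi f"
  using Phi_scale[of f "-1"] by (simp add: scaleU_minus1)
lemma Phi_diff: assumes "fs f" "fs g" shows "Phi (\<lambda>p. f p - g p) = Phi f - Phi g"
  using Phi_add[OF assms(1) fs_neg[OF assms(2)]] Phi_neg[OF assms(2)] unfolding diff_conv_add_uminus by simp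
lemma Phi_zero: "Phi (\<lambda>p. 0) = 0"
  by (simp add: Phi_def)
lemma Phi_sum: "(\<And>i. i \<in> T \<Longrightarrow> fs (g i)) \<Longrightarrow> Phi (\<lambda>p. \<Sum>i\<in>T. g i p) = (\<Sum>i\<in>T. Phi (g i))"
proof (induction T rule: infinite_finite_induct)
  case (infinite T) then show ?case by (simp add: Phi_zero)
next
  case empty then show ?case by (simp add: Phi_zero)
next
  case (insert i T)
  have "Phi (\<lambda>p. \<Sum>i\<in>insert i T. g i p) = Phi (\<lambda>p. g i p + (\<Sum>i\<in>T. g i p))"
    using insert by simp
  also have "\<dots> = Phi (g i) + Phi (\<lambda>p. \<Sum>i\<in>T. g i p)"
    using Phi_add[of "g i" "\<lambda>p. \<Sum>i\<in>T. g i p"] insert fs_sum[of T g] by simp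
  finally show ?case using insert by simp
qed

lemma Phi_delta: "Phi (delta x y) = y * x"
proof -
  have "Phi (delta x y) = (\<Sum>p\<in>{(x, y)}. scaleU (delta x y p) (snd p * fst p))"
    by (rule Phi_sup) (auto simp: delta_def split: if_splits)
  then show ?thesis by (simp add: delta_def scaleU_one)
qed


lemma Usp_zero: "0 \<in> Usp"
  using Usp.scl[OF Usp.one, of 0] by (simp add: scaleU_zero_left)
lemma Usp_sum: "(\<And>i. i \<in> T \<Longrightarrow> g i \<in> Usp) \<Longrightarrow> sum g T \<in> Usp"
  by (induction T rule: infinite_finite_induct) (auto simp: Usp_zero intro: Usp.add)
lemma Omega_zero: "0 \<in> Omega" unfolding Omega_def by (rule uspan_0)
lemma Omega_add: "x \<in> Omega \<Longrightarrow> y \<in> Omega \<Longrightarrow> x + y \<in> Omega" unfolding Omega_def by (rule uspan_add)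
lemma Omega_scale: "x \<in> Omega \<Longrightarrow> scaleU c x \<in> Omega" unfolding Omega_def by (rule uspan_scale)
lemma Omega_sum: "(\<And>i. i \<in> T \<Longrightarrow> g i \<in> Omega) \<Longrightarrow> sum g T \<in> Omega" unfolding Omega_def by (rule uspan_sum)

abbreviation RR :: "('n::finite U \<times> 'n U \<Rightarrow> complex) set" where
  "RR \<equiv> bilin_rels Usp Omega"

lemma B2: "x \<in> Usp \<Longrightarrow> x' \<in> Usp \<Longrightarrow> y \<in> Omega \<Longrightarrow>
  (\<lambda>p. delta (x + x') y p - delta x y p - delta x' y p) \<in> cspan RR"
  unfolding bilin_rels_def by (rule cspan_gen, rule UnI1, rule UnI1, rule UnI1) blast
lemma B1: "x \<in> Usp \<Longrightarrow> y \<in> Omega \<Longrightarrow> y' \<in> Omega \<Longrightarrow>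
  (\<lambda>p. delta x (y + y') p - delta x y p - delta x y' p) \<in> cspan RR"
  unfolding bilin_rels_def by (rule cspan_gen, rule UnI1, rule UnI1, rule UnI2) blast
lemma B3: "x \<in> Usp \<Longrightarrow> y \<in> Omega \<Longrightarrow>
  (\<lambda>p. delta (scaleU c x) y p - c * delta x y p) \<in> cspan RR"
  unfolding bilin_rels_def by (rule cspan_gen, rule UnI1, rule UnI2) blast
lemma B4: "x \<in> Usp \<Longrightarrow> y \<in> Omega \<Longrightarrow>
  (\<lambda>p. delta x (scaleU c y) p - c * delta x y p) \<in> cspan RR"
  unfolding bilin_rels_def by (rule cspan_gen, rule UnI2) blast

lemma B0l: "y \<in> Omega \<Longrightarrow> delta 0 y \<in> cspan RR"
proof -
  assume y: "y \<in> Omega"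
  have "(\<lambda>p. delta (0 + 0) y p - delta 0 y p - delta 0 y p) \<in> cspan RR"
    using B2[OF Usp_zero Usp_zero y] .
  then have "(\<lambda>p. - (- delta 0 y p)) \<in> cspan RR" using cspan_neg by fastforce
  then show ?thesis by simp
qed
lemma B0r: "x \<in> Usp \<Longrightarrow> delta x 0 \<in> cspan RR"
proof -
  assume x: "x \<in> Usp"
  have "(\<lambda>p. delta x (0 + 0) p - delta x 0 p - delta x 0 p) \<in> cspan RR"
    using B1[OF x Omega_zero Omega_zero] .
  then have "(\<lambda>p. - (- delta x 0 p)) \<in> cspan RR" using cspan_neg by fastforce
  then show ?thesis by simp
qed

lemma cspan_fun_eq: "f \<in> cspan R \<Longrightarrow> f = g \<Longrightarrow> g \<in> cspan R" by simp

lemma K1: assumes x: "x \<in> Usp" and ys: "\<And>i. i \<in> T \<Longrightarrow> ys i \<in> Omega"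
  shows "(\<lambda>p. delta x (\<Sum>i\<in>T. ys i) p - (\<Sum>i\<in>T. delta x (ys i) p)) \<in> cspan RR"
  using ys
proof (induction T rule: infinite_finite_induct)
  case (infinite T) then show ?case using B0r[OF x] by simp
next
  case empty then show ?case using B0r[OF x] by simp
next
  case (insert i T)
  have S: "(\<Sum>i\<in>T. ys i) \<in> Omega" using insert by (intro Omega_sum) auto
  have a: "(\<lambda>p. delta x (ys i + (\<Sum>i\<in>T. ys i)) p - delta x (ys i) p - delta x (\<Sum>i\<in>T. ys i) p) \<in> cspan RR"
    using B1[OF x _ S, of "ys i"] insert by simp
  have b: "(\<lambda>p. delta x (\<Sum>i\<in>T. ys i) p - (\<Sum>i\<in>T. delta x (ys i) p)) \<in> cspan RR"
    using insert by simp
  show ?case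
    by (rule cspan_fun_eq[OF cspan_add[OF a b]]) (rule ext, simp add: insert algebra_simps)
qed

lemma K1':
  assumes x: "x \<in> Usp"
  shows "(\<lambda>p. delta x (\<Sum>I\<in>UNIV. scaleU (c I) (wI I)) p - (\<Sum>I\<in>UNIV. delta (scaleU (c I) x) (wI I) p)) \<in> cspan RR"
proof -
  have a: "(\<lambda>p. delta x (\<Sum>I\<in>UNIV. scaleU (c I) (wI I)) p - (\<Sum>I\<in>UNIV. delta x (scaleU (c I) (wI I)) p)) \<in> cspan RR"
    by (rule K1[OF x]) (intro Omega_scale wI_Omega)
  have b: "(\<lambda>p. (\<Sum>I\<in>UNIV. delta x (scaleU (c I) (wI I)) p) - (\<Sum>I\<in>UNIV. delta (scaleU (c I) x) (wI I) p)) \<in> cspan RR"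
  proof -
    have "(\<lambda>p. \<Sum>I\<in>UNIV. (delta x (scaleU (c I) (wI I)) p - c I * delta x (wI I) p)
              - (delta (scaleU (c I) x) (wI I) p - c I * delta x (wI I) p)) \<in> cspan RR"
      by (rule cspan_sum, rule cspan_diff) (intro B3 B4 x wI_Omega)+
    then show ?thesis by (rule cspan_fun_eq) (rule ext, simp add: sum_subtractf)
  qed
  show ?thesis by (rule cspan_eq_trans[OF a b])
qed

lemma K3: assumes xs: "\<And>i. i \<in> T \<Longrightarrow> xs i \<in> Usp" and y: "y \<in> Omega"
  shows "(\<lambda>p. (\<Sum>i\<in>T. delta (xs i) y p) - delta (\<Sum>i\<in>T. xs i) y p) \<in> cspan RR"
  using xs
proof (induction T rule: infinite_finite_induct)
  case (infinite T) then show ?case using cspan_neg[OF B0l[OF y]] by simp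
next
  case empty then show ?case using cspan_neg[OF B0l[OF y]] by simp
next
  case (insert i T)
  have S: "(\<Sum>i\<in>T. xs i) \<in> Usp" using insert by (intro Usp_sum) auto
  have a: "(\<lambda>p. delta (xs i + (\<Sum>i\<in>T. xs i)) y p - delta (xs i) y p - delta (\<Sum>i\<in>T. xs i) y p) \<in> cspan RR"
    using B2[OF _ S y, of "xs i"] insert by simp
  have b: "(\<lambda>p. (\<Sum>i\<in>T. delta (xs i) y p) - delta (\<Sum>i\<in>T. xs i) y p) \<in> cspan RR"
    using insert by simp
  show ?case
    by (rule cspan_fun_eq[OF cspan_diff[OF b a]]) (rule ext, simp add: insert algebra_simps)
qed

lemma fs_cspan: "(\<And>r. r \<in> R \<Longrightarrow> fs r) \<Longrightarrow> h \<in> cspan R \<Longrightarrow> fs h"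
proof -
  assume R: "\<And>r. r \<in> R \<Longrightarrow> fs r" and h: "h \<in> cspan R"
  from h show ?thesis
  proof (induction h rule: cspan_induct)
    case zero then show ?case by (rule fs_zero)
  next
    case (cons v c y) then show ?case using R by (intro fs_add fs_scale) auto
  qed
qed

lemma rel_props: "r \<in> RR \<Longrightarrow> fs r \<and> Phi r = 0"
proof -
  assume "r \<in> RR"
  then consider
      (a) x x' y where "r = (\<lambda>p. delta (x + x') y p - delta x y p - delta x' y p)"
    | (b) x y y' where "r = (\<lambda>p. delta x (y + y') p - delta x y p - delta x y' p)"
    | (c) c x y where "r = (\<lambda>p. delta (scaleU c x) y p - c * delta x y p)"
    | (d) c x y where "r = (\<lambda>p. delta x (scaleU c y) p - c * delta x y p)"
    unfolding bilin_rels_def by blast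
  then show ?thesis
  proof cases
    case a then show ?thesis
      by (simp add: fs_diff fs_delta Phi_diff Phi_delta distrib_left)
  next
    case b then show ?thesis
      by (simp add: fs_diff fs_delta Phi_diff Phi_delta distrib_right)
  next
    case c then show ?thesis
      by (simp add: fs_diff fs_delta fs_scale Phi_diff Phi_scale Phi_delta scaleU_mult_right)
  next
    case d then show ?thesis
      by (simp add: fs_diff fs_delta fs_scale Phi_diff Phi_scale Phi_delta scaleU_mult_left)
  qed
qed

lemma fs_RR: "h \<in> cspan RR \<Longrightarrow> fs h"
  using fs_cspan rel_props by blast

lemma Phi_RR: "h \<in> cspan RR \<Longrightarrow> Phi h = 0"
proof (induction h rule: cspan_induct)
  case zero then show ?case by (rule Phi_zero)
next
  case (cons v c y)
  have fv: "fs v" using rel_props cons by blast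
  have fy: "fs y" using fs_RR cons by blast
  show ?case using Phi_add[OF fs_scale[OF fv] fy] Phi_scale[OF fv] rel_props[OF cons(1)] cons.IH
    by (simp add: scaleU_zero_right)
qed


section \<open>Kernel and image of Phi\<close>

lemma FSp_fs: "f \<in> FSp A B \<Longrightarrow> fs f"
  unfolding FSp_def fs_def by blast

lemma kernel:
  fixes f :: "'n::finite U \<times> 'n U \<Rightarrow> complex"
  assumes fF: "f \<in> FSp Usp Omega" and z: "Phi f = 0"
  shows "f \<in> cspan RR"
proof -
  define S where "S = {p. f p \<noteq> 0}"
  have fS: "finite S" and SAB: "S \<subseteq> Usp \<times> Omega" using fF by (auto simp: FSp_def S_def)
  have ex: "\<forall>q\<in>S. \<exists>c. snd q = (\<Sum>I\<in>UNIV. scaleU (c I) (wI I))"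
  proof
    fix q assume "q \<in> S"
    then have "snd q \<in> Omega" using SAB by auto
    then have "snd q \<in> uspan (range wI)" by (rule Omega_span)
    then show "\<exists>c. snd q = (\<Sum>I\<in>UNIV. scaleU (c I) (wI I))" by (rule span_repr)
  qed
  have "\<exists>C. \<forall>q\<in>S. snd q = (\<Sum>I\<in>UNIV. scaleU (C q I) (wI I))"
    using bchoice[OF ex] .
  then obtain C where C0: "\<forall>q\<in>S. snd q = (\<Sum>I\<in>UNIV. scaleU (C q I) (wI I))" by blast
  have C: "\<And>q. q \<in> S \<Longrightarrow> snd q = (\<Sum>I\<in>UNIV. scaleU (C q I) (wI I))" using C0 by blast
  define x where "x = (\<lambda>q. scaleU (f q) (fst q))"
  have xU: "x q \<in> Usp" if "q \<in> S" for q
  proof -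
    have "fst q \<in> Usp" using SAB that by auto
    then show ?thesis unfolding x_def by (rule Usp.scl)
  qed
  have yO: "snd q \<in> Omega" if "q \<in> S" for q using SAB that by auto
  define v where "v = (\<lambda>I. \<Sum>q\<in>S. scaleU (C q I) (x q))"
  have vU: "v I \<in> Usp" for I unfolding v_def by (intro Usp_sum Usp.scl xU)
  define g where "g = (\<lambda>p. \<Sum>I\<in>UNIV. delta (v I) (wI I) p)"
  have step1: "(\<lambda>p. f p - (\<Sum>q\<in>S. delta (x q) (snd q) p)) \<in> cspan RR"
  proof -
    have fsum: "f p = (\<Sum>q\<in>S. f q * delta (fst q) (snd q) p)" for p
    proof -
      have "(\<Sum>q\<in>S. f q * delta (fst q) (snd q) p) = (\<Sum>q\<in>S. if q = p then f p else 0)"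
        by (rule sum.cong) (auto simp: delta_def)
      also have "\<dots> = f p" using fS by (simp add: S_def)
      finally show ?thesis by simp
    qed
    have "(\<lambda>p. \<Sum>q\<in>S. - (delta (x q) (snd q) p - f q * delta (fst q) (snd q) p)) \<in> cspan RR"
      unfolding x_def using SAB by (intro cspan_sum cspan_neg B3) auto
    then show ?thesis
      by (rule cspan_fun_eq) (rule ext, simp add: fsum[symmetric] sum_subtractf sum_negf)
  qed
  have step2: "(\<lambda>p. (\<Sum>q\<in>S. delta (x q) (snd q) p) - (\<Sum>q\<in>S. \<Sum>I\<in>UNIV. delta (scaleU (C q I) (x q)) (wI I) p)) \<in> cspan RR"
  proof -
    have "(\<lambda>p. \<Sum>q\<in>S. (delta (x q) (\<Sum>I\<in>UNIV. scaleU (C q I) (wI I)) p - (\<Sum>I\<in>UNIV. delta (scaleU (C q I) (x q)) (wI I) p))) \<in> cspan RR"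
      by (intro cspan_sum K1' xU)
    then show ?thesis
      by (rule cspan_fun_eq) (rule ext, simp add: sum_subtractf C[symmetric] cong: sum.cong)
  qed
  have step3: "(\<lambda>p. (\<Sum>q\<in>S. \<Sum>I\<in>UNIV. delta (scaleU (C q I) (x q)) (wI I) p) - g p) \<in> cspan RR"
  proof -
    have "(\<lambda>p. \<Sum>I\<in>UNIV. ((\<Sum>q\<in>S. delta (scaleU (C q I) (x q)) (wI I) p) - delta (v I) (wI I) p)) \<in> cspan RR"
      unfolding v_def by (intro cspan_sum K3 Usp.scl xU wI_Omega)
    then show ?thesis
      by (rule cspan_fun_eq) (rule ext, simp add: g_def sum_subtractf sum.swap[of _ S])
  qed
  have D: "(\<lambda>p. f p - g p) \<in> cspan RR"
    by (rule cspan_eq_trans[OF cspan_eq_trans[OF step1 step2] step3])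
  have fg: "fs g" unfolding g_def by (intro fs_sum fs_delta)
  have "Phi (\<lambda>p. f p - g p) = 0" by (rule Phi_RR[OF D])
  then have "Phi g = 0" using Phi_diff[OF FSp_fs[OF fF] fg] z by simp
  moreover have "Phi g = (\<Sum>I\<in>UNIV. wI I * v I)"
    unfolding g_def by (simp add: Phi_sum fs_delta Phi_delta)
  ultimately have sum0: "(\<Sum>I\<in>UNIV. wI I * v I) = 0" by simp
  have v0: "v I = 0" for I using triangular[OF vU sum0] .
  have G: "g \<in> cspan RR" unfolding g_def v0 by (intro cspan_sum B0l wI_Omega)
  show ?thesis
    by (rule cspan_fun_eq[OF cspan_add[OF D G]]) simp
qed

lemma surj_Phi: "\<exists>f\<in>FSp Usp Omega. Phi f = (z :: 'n::finite U)"
proof -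
  have "z \<in> Sp" by (rule all_in_Sp)
  then show ?thesis unfolding Sp_def
  proof (induction z rule: uspan_induct)
    case zero
    show ?case by (rule bexI[of _ "\<lambda>p. 0"]) (simp_all add: Phi_zero FSp_def)
  next
    case (cons v c y)
    then obtain w u where v: "v = w * u" "w \<in> Omega" "u \<in> Usp" by blast
    obtain f where f: "f \<in> FSp Usp Omega" "Phi f = y" using cons.IH by blast
    define f' where "f' = (\<lambda>p. c * delta u w p + f p)"
    have "f' \<in> FSp Usp Omega"
    proof -
      have "{p. f' p \<noteq> 0} \<subseteq> {(u, w)} \<union> {p. f p \<noteq> 0}" by (auto simp: f'_def delta_def)
      moreover have "finite {p. f p \<noteq> 0}" "{p. f p \<noteq> 0} \<subseteq> Usp \<times> Omega" using f(1) by (auto simp: FSp_def)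
      ultimately show ?thesis unfolding FSp_def using v by (auto intro: finite_subset)
    qed
    moreover have "Phi f' = scaleU c v + y"
      unfolding f'_def using Phi_add[OF fs_scale[OF fs_delta] FSp_fs[OF f(1)]] Phi_scale[OF fs_delta] f(2) v(1)
      by (simp add: Phi_delta)
    ultimately show ?case by blast
  qed
qed

theorem proposition2:
  shows "(\<forall>a b. act2 a b ` (Omega :: ('n::finite) U set) \<subseteq> Omega) \<and>
         sp_equiv_tensor (Usp :: 'n U set) (Omega :: 'n U set)"
proof
  show "\<forall>a b. act2 a b ` (Omega :: 'n U set) \<subseteq> Omega" using act2_Omega by blast
next
  show "sp_equiv_tensor (Usp :: 'n U set) (Omega :: 'n U set)"
    unfolding sp_equiv_tensor_def
  proof (intro exI[of _ Phi] conjI ballI allI)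
    fix f g :: "'n U \<times> 'n U \<Rightarrow> complex" assume "f \<in> FSp Usp Omega" "g \<in> FSp Usp Omega"
    then show "Phi (\<lambda>p. f p + g p) = Phi f + Phi g" by (intro Phi_add FSp_fs)
  next
    fix f :: "'n U \<times> 'n U \<Rightarrow> complex" and c assume "f \<in> FSp Usp Omega"
    then show "Phi (\<lambda>p. c * f p) = scaleU c (Phi f)" by (intro Phi_scale FSp_fs)
  next
    have "z \<in> Phi ` FSp Usp Omega" for z :: "'n U"
    proof -
      obtain f where "f \<in> FSp Usp Omega" "Phi f = z" using surj_Phi[of z] by blast
      then show ?thesis by (metis image_eqI)
    qed
    then show "Phi ` FSp Usp Omega = (UNIV :: 'n U set)" by blast
  next
    fix f :: "'n U \<times> 'n U \<Rightarrow> complex" assume f: "f \<in> FSp Usp Omega"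
    show "Phi f = 0 \<longleftrightarrow> f \<in> RelSp Usp Omega"
      unfolding RelSp_cspan using kernel[OF f] Phi_RR by blast
  next
    fix a b :: "'n idx" and x y :: "'n U" assume "x \<in> (Usp :: 'n U set)" "y \<in> (Omega :: 'n U set)"
    show "act2 a b (Phi (delta x y)) = Phi (delta (act2 a b x) y) + Phi (delta x (act2 a b y))"
      by (simp add: Phi_delta act2_mult add.commute)
  qed
qed

end
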